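(* Let $n\ge 2$ and $\rho \in \mathbf{C} \setminus \{-1, 0, 1\}$, and let $K_n(\rho)=\left[\rho^{|j-k|}\right]_{j,k=1}^n$. If $\lambda$ is a repeated eigenvalue of $K_n(\rho)$, then $\lambda = -n$ and $\lambda$ is a double eigenvalue. Moreover, $\lambda = -n$ is a double eigenvalue of type 1 iff $$\rho = \xi_n \frac{T_{(n+1)/2}(t_0)}{T_{(n-1)/2}(t_0)},$$ where $t_0 \in \mathbf{C}$ is any zero of the polynomial $$q_1(n, t) = \begin{cases} \frac{U_{n-1}(t) - n}{t-1}, & n = 4, 6, 8, \dots \\ \frac{U_{n-1}(t) - n}{t^2 - 1}, & n = 5, 7, 9, \dots; \end{cases}$$ while $\lambda = -n$ is a double eigenvalue of type 2 iff $$\rho = \frac{T_{(n+1)/2}(t_0)}{T_{(n-1)/2}(t_0)},$$ where $t_0 \in \mathbf{C}$ is any zero of the polynomial $$q_2(n, t) = \begin{cases} \frac{U_{n-1}(t) + n}{t+1}, & n = 4, 6, 8, \dots \\ U_{n-1}(t) + n, & n = 3, 5, 7, \dots \end{cases}$$ The multivaluedness of $\operatorname{Arccos} t$ does not affect the two formulas for $\rho$. When $n$ is odd, $T_{(n\pm 1)/2}(t)$ is the Chebyshev polynomial of the first kind.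
   Context: Here $\xi_n = \frac{n+1}{n-1}$; $U_k(t)$ is the Chebyshev polynomial of the second kind, $U_k(t)=\frac{\sin[(k+1)\theta]}{\sin\theta}$ with $t=\cos\theta\in\mathbf{C}$; and $T_{(n\pm 1)/2}(t) = \cos\left(\frac{n\pm 1}{2} \operatorname{Arccos} t\right)$ for $t \in \mathbf{C}$. Eigenvalues of $K_n(\rho)$ (for $\rho \in \mathbf{C} \setminus \{-\xi_n,-1,0,1,\xi_n\}$) are classified as follows: writing $z=e^{i\mu}$ with $z\neq\pm1$ ($\mu$ not an integer multiple of $\pi$), a type-1 eigenvalue is $\lambda=-\frac{\sin(n\mu)}{\sin\mu}$ where $\mu$ satisfies $\sin\frac{\mu(n+1)}{2}-\rho\sin\frac{\mu(n-1)}{2}=0$ (equivalently $z$ is a zero of $s_{n+1}(\rho,z)=z^{n+1}-\rho z^n+\rho z-1$; eigenvector with entries $\sin[\mu(j-\frac{n-1}{2})]$, $j=0,\dots,n-1$, which is skew-symmetric), and a type-2 eigenvalue is $\lambda=\frac{\sin(n\mu)}{\sin\mu}$ where $\mu$ satisfies $\cos\frac{\mu(n+1)}{2}-\rho\cos\frac{\mu(n-1)}{2}=0$ (equivalently $z$ is a zero of $c_{n+1}(\rho,z)=z^{n+1}-\rho z^n-\rho z+1$; eigenvector with entries $\cos[\mu(j-\frac{n-1}{2})]$, which is symmetric). The two types are mutually exclusive; there are $\lfloor n/2\rfloor$ type-1 and $\lceil n/2\rceil$ type-2 eigenvalues. For $\rho=\pm\xi_n$, $K_n(\rho)$ has no repeated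 eigenvalues. *)

theory Defs
  imports "HOL-Analysis.Analysis" "Jordan_Normal_Form.Char_Poly"
begin

definition KMS :: "nat \<Rightarrow> complex \<Rightarrow> complex mat" where
  "KMS n \<rho> = mat n n (\<lambda>(j,k). \<rho> ^ (if k \<le> j then j - k else k - j))"

definition alg_mult :: "nat \<Rightarrow> complex \<Rightarrow> complex \<Rightarrow> nat" where
  "alg_mult n \<rho> lam = order lam (char_poly (KMS n \<rho>))"

definition xi :: "nat \<Rightarrow> complex" where
  "xi n = (of_nat n + 1) / (of_nat n - 1)"

fun chebU :: "nat \<Rightarrow> complex poly" where
  "chebU 0 = 1"
| "chebU (Suc 0) = [:0, 2:]"
| "chebU (Suc (Suc k)) = [:0, 2:] * chebU (Suc k) - chebU k"

definition chebT_half :: "nat \<Rightarrow> complex \<Rightarrow> complex" where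
  "chebT_half m t = cos (of_nat m / 2 * Arccos t)"

definition q1 :: "nat \<Rightarrow> complex poly" where
  "q1 n = (if even n then (chebU (n - 1) - [:of_nat n:]) div [:-1, 1:]
           else (chebU (n - 1) - [:of_nat n:]) div [:-1, 0, 1:])"

definition q2 :: "nat \<Rightarrow> complex poly" where
  "q2 n = (if even n then (chebU (n - 1) + [:of_nat n:]) div [:1, 1:]
           else chebU (n - 1) + [:of_nat n:])"

text \<open>Type-1 / type-2 eigenvalues, as in the paper (z = e^{i mu} <> +-1 iff sin mu <> 0).\<close>
definition type1_eig :: "nat \<Rightarrow> complex \<Rightarrow> complex \<Rightarrow> bool" where
  "type1_eig n \<rho> lam \<longleftrightarrow> (\<exists>\<mu>::complex. sin \<mu> \<noteq> 0 \<and>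
      sin (\<mu> * (of_nat n + 1) / 2) - \<rho> * sin (\<mu> * (of_nat n - 1) / 2) = 0 \<and>
      lam = - sin (of_nat n * \<mu>) / sin \<mu>)"

definition type2_eig :: "nat \<Rightarrow> complex \<Rightarrow> complex \<Rightarrow> bool" where
  "type2_eig n \<rho> lam \<longleftrightarrow> (\<exists>\<mu>::complex. sin \<mu> \<noteq> 0 \<and>
      cos (\<mu> * (of_nat n + 1) / 2) - \<rho> * cos (\<mu> * (of_nat n - 1) / 2) = 0 \<and>
      lam = sin (of_nat n * \<mu>) / sin \<mu>)"

end

theory Submission
  imports Defs
begin

lemma det_border:
  fixes B :: "'a::comm_ring_1 mat"
  assumes B: "B \<in> carrier_mat (Suc (Suc m)) (Suc (Suc m))"
  and z1: "\<And>j. j < m \<Longrightarrow> B $$ (Suc m, j) = 0"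
  and z2: "\<And>i. i < m \<Longrightarrow> B $$ (i, Suc m) = 0"
  shows "det B = B$$(Suc m, Suc m) * det (mat_delete B (Suc m) (Suc m))
     - B$$(m, Suc m) * B$$(Suc m, m) * det (mat_delete (mat_delete B (Suc m) (Suc m)) m m)"
proof -
  have "det B = (\<Sum>j<Suc (Suc m). B $$ (Suc m, j) * cofactor B (Suc m) j)"
    by (rule laplace_expansion_row[OF B], simp)
  also have "\<dots> = B $$ (Suc m, m) * cofactor B (Suc m) m + B $$ (Suc m, Suc m) * cofactor B (Suc m) (Suc m)"
    using z1 by simp
  finally have 1: "det B = \<dots>" .
  define C where "C = mat_delete B (Suc m) m"
  have C: "C \<in> carrier_mat (Suc m) (Suc m)" unfolding C_def using mat_delete_carrier[OF B] by simp
  have "det C = (\<Sum>i<Suc m. C $$ (i, m) * cofactor C i m)"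
    by (rule laplace_expansion_column[OF C], simp)
  also have "\<dots> = C $$ (m,m) * cofactor C m m"
    using z2 B by (simp add: C_def mat_delete_def)
  also have "C $$ (m,m) = B $$ (m, Suc m)" using B by (simp add: C_def mat_delete_def)
  also have "cofactor C m m = det (mat_delete (mat_delete B (Suc m) (Suc m)) m m)"
  proof -
    have e: "(-1::'a)^(m+m) = 1" by (simp add: mult_2[symmetric])
    have "mat_delete C m m = mat_delete (mat_delete B (Suc m) (Suc m)) m m"
      by (rule eq_matI, insert B, auto simp: C_def mat_delete_def)
    thus ?thesis unfolding cofactor_def e by simp
  qed
  finally have 2: "det C = B $$ (m, Suc m) * det (mat_delete (mat_delete B (Suc m) (Suc m)) m m)" by simp
  show ?thesis unfolding 1 cofactor_def C_def[symmetric] 2 by simp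
qed

definition Mx :: "complex \<Rightarrow> nat \<Rightarrow> complex \<Rightarrow> complex mat" where
  "Mx \<rho> k x = mat k k (\<lambda>(i,j). (if i = j then x else 0) - \<rho> ^ (if j \<le> i then i - j else j - i))"

lemma Mx_carrier[simp]: "Mx \<rho> k x \<in> carrier_mat k k" by (simp add: Mx_def)
lemma Mx_dim[simp]: "dim_row (Mx \<rho> k x) = k" "dim_col (Mx \<rho> k x) = k" by (simp_all add: Mx_def)

lemma char_poly_KMS: "poly (char_poly (KMS k \<rho>)) x = det (Mx \<rho> k x)"
proof -
  have "poly (char_poly (KMS k \<rho>)) x = det (- (char_matrix (KMS k \<rho>) x))"
    by (rule char_poly_matrix[of _ k], simp add: KMS_def)
  also have "- (char_matrix (KMS k \<rho>) x) = Mx \<rho> k x"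
    by (rule eq_matI, auto simp: Mx_def KMS_def char_matrix_def)
  finally show ?thesis .
qed

lemma Mx_delete: "mat_delete (Mx \<rho> (Suc k) x) k k = Mx \<rho> k x"
  by (rule eq_matI, auto simp: Mx_def mat_delete_def)

lemma Mx_rec: "det (Mx \<rho> (Suc (Suc m)) x) =
   (x * (1 + \<rho>^2) - (1 - \<rho>^2)) * det (Mx \<rho> (Suc m) x) - \<rho>^2 * x^2 * det (Mx \<rho> m x)"
proof -
  let ?M = "Mx \<rho> (Suc (Suc m)) x"
  define A1 where "A1 = addcol (-\<rho>) (Suc m) m ?M"
  define B where "B = addrow (-\<rho>) (Suc m) m A1"
  have A1c: "A1 \<in> carrier_mat (Suc (Suc m)) (Suc (Suc m))" by (simp add: A1_def mat_addcol_def)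
  have Bc: "B \<in> carrier_mat (Suc (Suc m)) (Suc (Suc m))" by (simp add: B_def A1_def mat_addrow_def mat_addcol_def)
  have dA: "det A1 = det ?M" unfolding A1_def by (rule det_addcol[of m "Suc (Suc m)"], auto)
  have dB: "det B = det A1" unfolding B_def by (rule det_addrow[OF _ _ A1c], auto)
  have A1e: "A1 $$ (i,j) = (if j = Suc m then -\<rho> * ?M $$ (i, m) + ?M $$ (i, j) else ?M $$ (i,j))"
    if "i < Suc (Suc m)" "j < Suc (Suc m)" for i j
    using that by (auto simp: A1_def mat_addcol_def)
  have Be: "B $$ (i,j) = (if i = Suc m then -\<rho> * A1 $$ (m, j) + A1 $$ (i, j) else A1 $$ (i,j))"
    if "i < Suc (Suc m)" "j < Suc (Suc m)" for i j
    using that A1c by (auto simp: B_def mat_addrow_def)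
  have Me: "?M $$ (i,j) = (if i = j then x else 0) - \<rho> ^ (if j \<le> i then i - j else j - i)"
    if "i < Suc (Suc m)" "j < Suc (Suc m)" for i j
    using that by (simp add: Mx_def)
  have z1: "B $$ (Suc m, j) = 0" if "j < m" for j
  proof -
    have "Suc m - j = Suc (m - j)" using that by simp
    thus ?thesis using that by (simp add: Be A1e Me)
  qed
  have z2: "B $$ (i, Suc m) = 0" if "i < m" for i
  proof -
    have "Suc m - i = Suc (m - i)" using that by simp
    thus ?thesis using that by (simp add: Be A1e Me)
  qed
  have e1: "B $$ (Suc m, Suc m) = x * (1 + \<rho>^2) - (1 - \<rho>^2)"
    by (simp add: Be A1e Me algebra_simps power2_eq_square)
  have e2: "B $$ (m, Suc m) = - \<rho> * x" by (simp add: Be A1e Me algebra_simps)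
  have e3: "B $$ (Suc m, m) = - \<rho> * x" by (simp add: Be A1e Me algebra_simps)
  have d1: "mat_delete B (Suc m) (Suc m) = Mx \<rho> (Suc m) x"
    by (rule eq_matI, insert Bc, auto simp: mat_delete_def Be A1e Me, auto simp: Mx_def)
  have "det ?M = det B" using dA dB by simp
  also have "\<dots> = B$$(Suc m, Suc m) * det (mat_delete B (Suc m) (Suc m))
     - B$$(m, Suc m) * B$$(Suc m, m) * det (mat_delete (mat_delete B (Suc m) (Suc m)) m m)"
    by (rule det_border[OF Bc z1 z2])
  finally show ?thesis unfolding e1 e2 e3 d1 Mx_delete by (simp add: power2_eq_square algebra_simps)
qed

lemma Mx0: "det (Mx \<rho> 0 x) = 1"
  by (rule det_dim_zero, simp)

lemma Mx1: "det (Mx \<rho> (Suc 0) x) = x - 1"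
  by (subst det_single[of _], simp, simp add: Mx_def)

definition sv :: "complex \<Rightarrow> nat \<Rightarrow> complex \<Rightarrow> complex" where
  "sv \<rho> n z = z^(n+1) - \<rho> * z^n + \<rho> * z - 1"
definition cv :: "complex \<Rightarrow> nat \<Rightarrow> complex \<Rightarrow> complex" where
  "cv \<rho> n z = z^(n+1) - \<rho> * z^n - \<rho> * z + 1"

lemma sc_prod: "sv \<rho> n z * cv \<rho> n z = (z-\<rho>)^2 * z^(2*n) - (1-\<rho>*z)^2"
proof -
  have e: "z^(n+1) = z^n * z" "z^(2*n) = (z^n)^2" by (simp_all add: power_mult mult.commute)
  have "(X * z - \<rho> * X + \<rho> * z - 1) * (X * z - \<rho> * X - \<rho> * z + 1) = (z - \<rho>)^2 * X^2 - (1 - \<rho> * z)^2" for X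
    by (simp add: power2_eq_square algebra_simps)
  thus ?thesis unfolding sv_def cv_def e by simp
qed

lemma main_identity:
  assumes Q: "(1-\<rho>*z)*(z-\<rho>) \<noteq> 0"
  shows "(1-\<rho>^2) * ((1-\<rho>*z)*(z-\<rho>))^n * det (Mx \<rho> n ((1-\<rho>^2)*z / ((1-\<rho>*z)*(z-\<rho>)))) * (z^2-1)
     = (\<rho>*(1-\<rho>^2))^n * ((z-\<rho>)^2 * z^(2*n) - (1-\<rho>*z)^2)"
proof -
  define Q where "Q = (1-\<rho>*z)*(z-\<rho>)"
  define A where "A = (1-\<rho>^2)*z"
  define L where "L = A / Q"
  have LQ: "L * Q = A" using Q unfolding L_def Q_def by simp
  define F where "F n = (1-\<rho>^2) * Q^n * det (Mx \<rho> n L) * (z^2-1)" for n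
  define R where "R n = (\<rho>*(1-\<rho>^2))^n * ((z-\<rho>)^2 * z^(2*n) - (1-\<rho>*z)^2)" for n
  have Frec: "F (Suc (Suc m)) = (1-\<rho>^2)*\<rho>*(1+z^2) * F (Suc m) - \<rho>^2 * A^2 * F m" for m
  proof -
    have "F (Suc (Suc m)) = (1-\<rho>^2) * Q^(Suc (Suc m)) * ((L * (1 + \<rho>^2) - (1 - \<rho>^2)) * det (Mx \<rho> (Suc m) L) - \<rho>^2 * L^2 * det (Mx \<rho> m L)) * (z^2-1)"
      unfolding F_def Mx_rec ..
    also have "\<dots> = (L*Q * (1 + \<rho>^2) - (1 - \<rho>^2)*Q) * F (Suc m) - \<rho>^2 * (L*Q)^2 * F m"
      unfolding F_def by (simp add: power2_eq_square algebra_simps)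
    also have "L*Q * (1 + \<rho>^2) - (1 - \<rho>^2)*Q = (1-\<rho>^2)*\<rho>*(1+z^2)"
      unfolding LQ unfolding A_def Q_def by (simp add: power2_eq_square algebra_simps)
    finally show ?thesis unfolding LQ .
  qed
  have Rrec: "R (Suc (Suc m)) = (1-\<rho>^2)*\<rho>*(1+z^2) * R (Suc m) - \<rho>^2 * A^2 * R m" for m
  proof -
    have n1: "2*Suc (Suc m) = 2*m+4" "2*Suc m = 2*m+2" by simp_all
    have e: "z^(2*Suc (Suc m)) = z^(2*m) * z^4" "z^(2*Suc m) = z^(2*m) * z^2" unfolding n1 power_add by simp_all
    have g: "\<rho> * (1 - \<rho>^2) * (\<rho> * (1 - \<rho>^2) * P) *
     ((z - \<rho>)^2 * (Y * z ^ 4) - (1 - \<rho> * z)^2) =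
     (1 - \<rho>^2) * \<rho> * (1 + z^2) *
     (\<rho> * (1 - \<rho>^2) * P * ((z - \<rho>)^2 * (Y * z^2) - (1 - \<rho> * z)^2)) -
     \<rho>^2 * ((1 - \<rho>^2) * z)^2 * (P * ((z - \<rho>)^2 * Y - (1 - \<rho> * z)^2))" for P Y
      by (simp add: power2_eq_square algebra_simps power4_eq_xxxx)
    show ?thesis unfolding R_def A_def e power_Suc by (rule g)
  qed
  have F0: "F 0 = R 0" unfolding F_def R_def by (simp add: Mx0 power2_eq_square algebra_simps)
  have F1: "F 1 = R 1"
  proof -
    have "F 1 = (1-\<rho>^2) * (L*Q - Q) * (z^2-1)" unfolding F_def by (simp add: Mx1 algebra_simps)
    also have "\<dots> = R 1" unfolding LQ unfolding R_def A_def Q_def by (simp add: power2_eq_square algebra_simps)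
    finally show ?thesis .
  qed
  have "F n = R n \<and> F (Suc n) = R (Suc n)" for n
  proof (induction n)
    case 0 thus ?case using F0 F1 by simp
  next
    case (Suc n) thus ?case using Frec Rrec by simp
  qed
  thus ?thesis unfolding F_def R_def L_def A_def Q_def by simp
qed

definition Ap :: "complex \<Rightarrow> complex poly" where "Ap \<rho> = [:0, 1-\<rho>^2:]"
definition Qp :: "complex \<Rightarrow> complex poly" where "Qp \<rho> = [:-\<rho>, 1+\<rho>^2, -\<rho>:]"
definition homz :: "complex \<Rightarrow> nat \<Rightarrow> complex poly \<Rightarrow> complex poly" where
  "homz \<rho> d p = (\<Sum>k\<le>d. Polynomial.smult (coeff p k) (Ap \<rho> ^ k * Qp \<rho> ^ (d-k)))"

lemma poly_Ap: "poly (Ap \<rho>) z = (1-\<rho>^2)*z" by (simp add: Ap_def)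
lemma poly_Qp: "poly (Qp \<rho>) z = (1-\<rho>*z)*(z-\<rho>)" by (simp add: Qp_def algebra_simps power2_eq_square)

lemma poly_sum_upto: fixes p :: "complex poly" assumes "degree p \<le> d" shows "poly p x = (\<Sum>i\<le>d. coeff p i * x^i)"
proof -
  have "poly p x = (\<Sum>i\<le>degree p. coeff p i * x^i)" by (rule poly_altdef)
  also have "\<dots> = (\<Sum>i\<le>d. coeff p i * x^i)"
    by (rule sum.mono_neutral_left, insert assms, auto simp: coeff_eq_0)
  finally show ?thesis .
qed

lemma poly_hom: assumes "degree p \<le> d" "poly (Qp \<rho>) z \<noteq> 0"
  shows "poly (homz \<rho> d p) z = (poly (Qp \<rho>) z)^d * poly p (poly (Ap \<rho>) z / poly (Qp \<rho>) z)"
proof -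
  let ?a = "poly (Ap \<rho>) z" and ?q = "poly (Qp \<rho>) z"
  have "poly (homz \<rho> d p) z = (\<Sum>k\<le>d. coeff p k * (?a^k * ?q^(d-k)))"
    by (simp add: homz_def poly_sum)
  also have "\<dots> = (\<Sum>k\<le>d. ?q^d * (coeff p k * (?a/?q)^k))"
  proof (rule sum.cong[OF refl])
    fix k assume "k \<in> {..d}"
    hence "?q^d = ?q^k * ?q^(d-k)" by (simp add: power_add[symmetric])
    thus "coeff p k * (?a^k * ?q^(d-k)) = ?q^d * (coeff p k * (?a/?q)^k)"
      using assms(2) by (simp add: power_divide field_simps)
  qed
  also have "\<dots> = ?q^d * poly p (?a/?q)"
    by (simp add: sum_distrib_left[symmetric] poly_sum_upto[OF assms(1)])
  finally show ?thesis .
qed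

lemma Qp_nz: "\<rho> \<noteq> 0 \<Longrightarrow> Qp \<rho> \<noteq> 0" by (simp add: Qp_def)

lemma poly_eq_off_Q: assumes "\<rho> \<noteq> 0" and "\<And>z. poly (Qp \<rho>) z \<noteq> 0 \<Longrightarrow> poly p z = poly q z"
  shows "p = q"
proof -
  have "poly ((p - q) * Qp \<rho>) z = 0" for z
    using assms(2)[of z] by (cases "poly (Qp \<rho>) z = 0", auto)
  hence "(p - q) * Qp \<rho> = 0" by (simp add: poly_all_0_iff_0[symmetric] del: poly_mult)
  thus ?thesis using Qp_nz[OF assms(1)] by simp
qed

lemma degree_hom_le: "degree (homz \<rho> d p) \<le> 2 * d"
  unfolding homz_def
proof (rule degree_sum_le)
  fix k assume "k \<in> {..d}"
  hence k: "k \<le> d" by simp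
  have "degree (Polynomial.smult (coeff p k) (Ap \<rho> ^ k * Qp \<rho> ^ (d - k))) \<le> degree (Ap \<rho> ^ k * Qp \<rho> ^ (d - k))"
    by (rule degree_smult_le)
  also have "\<dots> \<le> degree (Ap \<rho> ^ k) + degree (Qp \<rho> ^ (d - k))" by (rule degree_mult_le)
  also have "\<dots> \<le> k * degree (Ap \<rho>) + (d-k) * degree (Qp \<rho>)" by (intro add_mono, insert degree_power_le[of "Ap \<rho>" k] degree_power_le[of "Qp \<rho>" "d-k"], simp_all add: mult.commute)
  also have "\<dots> \<le> k * 1 + (d-k) * 2"
    by (intro add_mono mult_le_mono2, auto simp: Ap_def Qp_def)
  also have "\<dots> \<le> 2 * d" using k by simp
  finally show "degree (Polynomial.smult (coeff p k) (Ap \<rho> ^ k * Qp \<rho> ^ (d - k))) \<le> 2 * d" .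
qed simp

lemma hom_factor:
  assumes "\<rho> \<noteq> 0" "degree h \<le> d"
  shows "homz \<rho> (d+m) ([:-a,1:]^m * h) = (Ap \<rho> - Polynomial.smult a (Qp \<rho>))^m * homz \<rho> d h"
proof (rule poly_eq_off_Q[OF assms(1)])
  fix z assume q: "poly (Qp \<rho>) z \<noteq> 0"
  let ?a = "poly (Ap \<rho>) z" and ?q = "poly (Qp \<rho>) z"
  have deg: "degree ([:-a,1:]^m * h) \<le> d + m"
  proof -
    have "degree ([:-a,1:]^m * h) \<le> degree ([:-a,1:]^m) + degree h" by (rule degree_mult_le)
    also have "degree ([:-a,1:]^m) \<le> degree [:-a,1::complex:] * m" by (rule degree_power_le)
    finally show ?thesis using assms(2) by simp
  qed
  have "poly (homz \<rho> (d+m) ([:-a,1:]^m * h)) z = ?q^(d+m) * ((?a/?q - a)^m * poly h (?a/?q))"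
    by (simp add: poly_hom[OF deg q])
  also have "\<dots> = (?q * (?a/?q - a))^m * (?q^d * poly h (?a/?q))"
    by (simp add: power_add power_mult_distrib)
  also have "?q * (?a/?q - a) = ?a - a * ?q" using q by (simp add: field_simps)
  finally show "poly (homz \<rho> (d+m) ([:-a,1:]^m * h)) z = poly ((Ap \<rho> - Polynomial.smult a (Qp \<rho>))^m * homz \<rho> d h) z"
    by (simp add: poly_hom[OF assms(2) q])
qed

definition Sp :: "complex \<Rightarrow> nat \<Rightarrow> complex poly" where
  "Sp \<rho> n = monom 1 (n+1) + Polynomial.smult (-\<rho>) (monom 1 n) + [:-1, \<rho>:]"
definition Cp :: "complex \<Rightarrow> nat \<Rightarrow> complex poly" where
  "Cp \<rho> n = monom 1 (n+1) + Polynomial.smult (-\<rho>) (monom 1 n) + [:1, -\<rho>:]"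

lemma poly_Sp: "poly (Sp \<rho> n) z = sv \<rho> n z" by (simp add: Sp_def sv_def poly_monom algebra_simps)
lemma poly_Cp: "poly (Cp \<rho> n) z = cv \<rho> n z" by (simp add: Cp_def cv_def poly_monom algebra_simps)

definition Pc :: "complex \<Rightarrow> nat \<Rightarrow> complex poly" where "Pc \<rho> n = char_poly (KMS n \<rho>)"
definition Gp :: "complex \<Rightarrow> nat \<Rightarrow> complex poly" where "Gp \<rho> n = homz \<rho> n (Pc \<rho> n)"

lemma KMS_carrier: "KMS n \<rho> \<in> carrier_mat n n" by (simp add: KMS_def)

lemma degree_Pc: "degree (Pc \<rho> n) = n" and coeff_Pc: "coeff (Pc \<rho> n) n = 1"
  using degree_monic_char_poly[OF KMS_carrier] by (auto simp: Pc_def)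

lemma Pc_nz: "Pc \<rho> n \<noteq> 0" using coeff_Pc[of \<rho> n] by auto

lemma poly_Pc: "poly (Pc \<rho> n) x = det (Mx \<rho> n x)" by (simp add: Pc_def char_poly_KMS)

lemma G_identity:
  assumes "\<rho> \<noteq> 0"
  shows "Polynomial.smult (1-\<rho>^2) (Gp \<rho> n * [:-1,0,1:]) = Polynomial.smult ((\<rho>*(1-\<rho>^2))^n) (Sp \<rho> n * Cp \<rho> n)"
proof (rule poly_eq_off_Q[OF assms])
  fix z assume q: "poly (Qp \<rho>) z \<noteq> 0"
  have q': "(1-\<rho>*z)*(z-\<rho>) \<noteq> 0" using q by (simp add: poly_Qp)
  have "poly (Polynomial.smult (1-\<rho>^2) (Gp \<rho> n * [:-1,0,1:])) z
     = (1-\<rho>^2) * ((1-\<rho>*z)*(z-\<rho>))^n * det (Mx \<rho> n ((1-\<rho>^2)*z / ((1-\<rho>*z)*(z-\<rho>)))) * (z^2-1)"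
    by (simp add: Gp_def poly_hom[OF eq_imp_le[OF degree_Pc] q] poly_Pc poly_Ap poly_Qp power2_eq_square algebra_simps)
  also have "\<dots> = (\<rho>*(1-\<rho>^2))^n * (sv \<rho> n z * cv \<rho> n z)"
    unfolding main_identity[OF q'] sc_prod ..
  finally show "poly (Polynomial.smult (1-\<rho>^2) (Gp \<rho> n * [:-1,0,1:])) z = poly (Polynomial.smult ((\<rho>*(1-\<rho>^2))^n) (Sp \<rho> n * Cp \<rho> n)) z"
    by (simp add: poly_Sp poly_Cp)
qed

lemma quad_factor:
  assumes r: "\<rho> \<noteq> 0" and l: "l \<noteq> 0" and root: "poly (Ap \<rho> - Polynomial.smult l (Qp \<rho>)) z0 = 0"
  shows "z0 \<noteq> 0" "Ap \<rho> - Polynomial.smult l (Qp \<rho>) = Polynomial.smult (l*\<rho>) ([:-z0,1:] * [:-1/z0,1:])"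
proof -
  show z0: "z0 \<noteq> 0" using root r l by (auto simp: Ap_def Qp_def)
  from root have e: "l*\<rho>*z0^2 + ((1-\<rho>^2) - l*(1+\<rho>^2))*z0 + l*\<rho> = 0"
    by (simp add: Ap_def Qp_def algebra_simps power2_eq_square)
  define B where "B = (1-\<rho>^2) - l*(1+\<rho>^2)"
  have b: "B = - l*\<rho>*(z0 + 1/z0)"
  proof -
    have "B*z0 = (l*\<rho>*z0^2 + B*z0 + l*\<rho>) - (l*\<rho>*z0^2 + l*\<rho>)" by simp
    also have "\<dots> = - l*\<rho>*(z0 + 1/z0) * z0" using e z0 unfolding B_def[symmetric]
      by (simp add: field_simps power2_eq_square)
    finally have "B * z0 = (- l*\<rho>*(z0 + 1/z0)) * z0" by simp
    thus ?thesis using z0 by (rule mult_right_cancel[THEN iffD1, rotated])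
  qed
  have p1: "[:-z0,1:] * [:-1/z0,1:] = [:1, -(z0+1/z0), 1:]" using z0 by simp
  have p2: "Ap \<rho> - Polynomial.smult l (Qp \<rho>) = [:l*\<rho>, B, l*\<rho>:]"
    by (simp add: Ap_def Qp_def B_def algebra_simps)
  show "Ap \<rho> - Polynomial.smult l (Qp \<rho>) = Polynomial.smult (l*\<rho>) ([:-z0,1:] * [:-1/z0,1:])"
    unfolding p1 p2 b by (simp add: algebra_simps)
qed

lemma order_pow: fixes p :: "complex poly" assumes "p \<noteq> 0" shows "order a (p^m) = m * order a p"
proof (induction m)
  case 0 thus ?case by simp
next
  case (Suc m)
  have "order a (p^Suc m) = order a p + order a (p^m)" unfolding power_Suc
    by (rule order_mult, simp add: assms)
  thus ?case using Suc by simp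
qed

lemma order_lin: "order z [:-w,1::complex:] = (if w = z then 1 else 0)"
proof (cases "w = z")
  case True thus ?thesis using order_power_n_n[of z 1] by simp
next
  case False
  hence "poly [:-w,1::complex:] z \<noteq> 0" by simp
  thus ?thesis using False order_root[of "[:-w,1:]" z] by auto
qed

lemma order_quad:
  assumes r: "\<rho> \<noteq> 0" and l: "l \<noteq> 0" and root: "poly (Ap \<rho> - Polynomial.smult l (Qp \<rho>)) z0 = 0"
  shows "order z0 (Ap \<rho> - Polynomial.smult l (Qp \<rho>)) = (if z0^2 = 1 then 2 else 1)"
proof -
  note qf = quad_factor[OF r l root]
  have "order z0 (Ap \<rho> - Polynomial.smult l (Qp \<rho>)) = order z0 ([:-z0,1:] * [:-1/z0,1:])"
    unfolding qf(2) by (rule order_smult, simp add: r l)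
  also have "\<dots> = order z0 [:-z0,1:] + order z0 [:-1/z0,1:]" by (rule order_mult, simp add: qf(1))
  also have "\<dots> = (if z0^2 = 1 then 2 else 1)" using qf(1)
    by (auto simp: order_lin power2_eq_square field_simps)
  finally show ?thesis .
qed

lemma order_relation:
  assumes r: "\<rho> \<noteq> 0" "\<rho>^2 \<noteq> 1" and l: "l \<noteq> 0" and root: "poly (Ap \<rho> - Polynomial.smult l (Qp \<rho>)) z0 = 0"
  shows "order z0 (Gp \<rho> n) = order l (Pc \<rho> n) * order z0 (Ap \<rho> - Polynomial.smult l (Qp \<rho>))"
proof -
  define m where "m = order l (Pc \<rho> n)"
  obtain h where h: "Pc \<rho> n = [:-l,1:]^m * h" and nd: "\<not> [:-l,1:] dvd h"
    using order_decomp[OF Pc_nz] unfolding m_def by blast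
  have hnz: "h \<noteq> 0" using nd by auto
  have degh: "degree h + m = n" using degree_Pc[of \<rho> n] hnz unfolding h
    by (simp add: degree_mult_eq degree_linear_power[of "-l", simplified])
  have hl: "poly h l \<noteq> 0" using nd by (simp add: poly_eq_0_iff_dvd)
  have z0: "z0 \<noteq> 0" using quad_factor[OF r(1) l root] by simp
  have q: "poly (Qp \<rho>) z0 \<noteq> 0"
  proof
    assume "poly (Qp \<rho>) z0 = 0"
    with root have "poly (Ap \<rho>) z0 = 0" by simp
    thus False using z0 r by (simp add: poly_Ap)
  qed
  have al: "poly (Ap \<rho>) z0 / poly (Qp \<rho>) z0 = l" using root q by (simp add: field_simps)
  have G: "Gp \<rho> n = (Ap \<rho> - Polynomial.smult l (Qp \<rho>))^m * homz \<rho> (degree h) h"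
    unfolding Gp_def using hom_factor[OF r(1) order_refl, of h m l] h degh by simp
  have hz: "poly (homz \<rho> (degree h) h) z0 \<noteq> 0"
    using poly_hom[OF order_refl q, of h] al hl q by simp
  have Qnz: "Ap \<rho> - Polynomial.smult l (Qp \<rho>) \<noteq> 0"
    using quad_factor(2)[OF r(1) l root] r l by simp
  have "order z0 (Gp \<rho> n) = order z0 ((Ap \<rho> - Polynomial.smult l (Qp \<rho>))^m) + order z0 (homz \<rho> (degree h) h)"
    unfolding G by (rule order_mult, insert hz Qnz, auto)
  also have "order z0 (homz \<rho> (degree h) h) = 0" using hz by (simp add: order_root)
  also have "order z0 ((Ap \<rho> - Polynomial.smult l (Qp \<rho>))^m) = m * order z0 (Ap \<rho> - Polynomial.smult l (Qp \<rho>))"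
    using Qnz by (simp add: order_pow)
  finally show ?thesis unfolding m_def by simp
qed

lemma ord_le_deriv:
  fixes p :: "complex poly"
  shows "poly ((pderiv ^^ k) p) x \<noteq> 0 \<Longrightarrow> order x p \<le> k"
proof (induction k arbitrary: p)
  case 0 thus ?case using order_root[of p x] by auto
next
  case (Suc k)
  have h: "poly ((pderiv ^^ k) (pderiv p)) x \<noteq> 0" using Suc.prems by (simp add: funpow_Suc_right del: funpow.simps)
  hence "order x (pderiv p) \<le> k" by (rule Suc.IH)
  have pnz: "p \<noteq> 0" using Suc.prems by (auto simp: funpow_Suc_right pderiv_0 simp del: funpow.simps)
  show ?case
  proof (cases "poly p x = 0")
    case True
    from order_pderiv[OF pnz True] \<open>order x (pderiv p) \<le> k\<close> show ?thesis by simp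
  next
    case False thus ?thesis using order_root[of p x] by auto
  qed
qed

lemma ord_ge2:
  fixes p :: "complex poly"
  assumes "p \<noteq> 0" "order x p \<ge> 2"
  shows "poly p x = 0" "poly (pderiv p) x = 0"
proof -
  show r: "poly p x = 0" using assms order_root[of p x] by auto
  have o: "order x p = Suc (order x (pderiv p))" by (rule order_pderiv[OF assms(1) r])
  have "pderiv p \<noteq> 0"
  proof
    assume "pderiv p = 0"
    then obtain c where "p = [:c:]" using pderiv_iszero by blast
    thus False using assms r by auto
  qed
  thus "poly (pderiv p) x = 0" using o assms(2) order_root[of "pderiv p" x] by auto
qed

lemma Sp_nz: "n \<noteq> 0 \<Longrightarrow> Sp \<rho> n \<noteq> 0"
proof -
  assume "n \<noteq> 0"
  have "coeff (Sp \<rho> n) (Suc n) = 1" using \<open>n \<noteq> 0\<close> by (cases n, auto simp: Sp_def coeff_monom)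
  thus ?thesis by auto
qed

lemma Cp_nz: "n \<noteq> 0 \<Longrightarrow> Cp \<rho> n \<noteq> 0"
proof -
  assume "n \<noteq> 0"
  have "coeff (Cp \<rho> n) (Suc n) = 1" using \<open>n \<noteq> 0\<close> by (cases n, auto simp: Cp_def coeff_monom)
  thus ?thesis by auto
qed

lemma pderiv_Sp: "pderiv (Sp \<rho> (Suc (Suc k))) = monom (of_nat k + 3) (Suc (Suc k)) + monom (-\<rho> * (of_nat k + 2)) (Suc k) + [:\<rho>:]"
  by (simp add: Sp_def pderiv_add pderiv_smult pderiv_monom pderiv_pCons smult_monom algebra_simps)

lemma pderiv_Cp: "pderiv (Cp \<rho> (Suc (Suc k))) = monom (of_nat k + 3) (Suc (Suc k)) + monom (-\<rho> * (of_nat k + 2)) (Suc k) + [:-\<rho>:]"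
  by (simp add: Cp_def pderiv_add pderiv_smult pderiv_monom pderiv_pCons smult_monom algebra_simps)

lemma pderiv2_Sp: "pderiv (pderiv (Sp \<rho> (Suc (Suc k)))) = monom ((of_nat k + 3) * (of_nat k + 2)) (Suc k) + monom (-\<rho> * (of_nat k + 2) * (of_nat k + 1)) k"
  by (simp add: pderiv_Sp pderiv_add pderiv_monom algebra_simps)

lemma pderiv2_Cp: "pderiv (pderiv (Cp \<rho> (Suc (Suc k)))) = pderiv (pderiv (Sp \<rho> (Suc (Suc k))))"
  by (simp add: pderiv_Sp pderiv_Cp pderiv_add)

lemma pderiv3_Sp: "pderiv (pderiv (pderiv (Sp \<rho> (Suc (Suc k))))) = monom ((of_nat k + 3) * (of_nat k + 2) * (of_nat k + 1)) k + monom (-\<rho> * (of_nat k + 2) * (of_nat k + 1) * of_nat k) (k - 1)"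
  by (simp add: pderiv2_Sp pderiv_add pderiv_monom algebra_simps)

lemma alg1:
  fixes X z \<rho> N :: complex
  assumes s: "\<rho>*(X - z) = X*z - 1" and d: "(N+1)*X*z - N*\<rho>*X + \<rho>*z = 0"
  shows "z*(X^2-1) = N*X*(z^2-1)"
proof -
  have "0 = ((N+1)*X*z - N*\<rho>*X + \<rho>*z)*(X - z)" using d by simp
  also have "\<dots> = (N+1)*X*z*(X-z) - (N*X - z)*(\<rho>*(X-z))" by (simp add: algebra_simps)
  also have "\<dots> = (N+1)*X*z*(X-z) - (N*X - z)*(X*z-1)" using s by simp
  also have "\<dots> = z*(X^2-1) - N*X*(z^2-1)" by (simp add: algebra_simps power2_eq_square)
  finally show ?thesis by simp
qed

lemma alg2:
  fixes X z \<rho> N :: complex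
  assumes s: "\<rho>*(X - z) = X*z - 1" and h: "z*(X^2-1) = N*X*(z^2-1)" and z: "z^2 \<noteq> 1"
  shows "(1-\<rho>^2)*z = -N*(1-\<rho>*z)*(z-\<rho>)"
proof -
  have Xz: "X - z \<noteq> 0"
  proof
    assume "X - z = 0"
    with s have "z*z - 1 = 0" by (simp add: algebra_simps)
    thus False using z by (simp add: power2_eq_square)
  qed
  have "(X-z)^2 * ((1-\<rho>^2)*z + N*(1-\<rho>*z)*(z-\<rho>)) =
     z*((X-z)^2 - (\<rho>*(X-z))^2) + N*((X-z) - z*(\<rho>*(X-z)))*(z*(X-z) - \<rho>*(X-z))"
    by (simp add: algebra_simps power2_eq_square)
  also have "\<dots> = z*((X-z)^2 - (X*z-1)^2) + N*((X-z) - z*(X*z-1))*(z*(X-z) - (X*z-1))"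
    unfolding s ..
  also have "\<dots> = (1-z^2)*(z*(X^2-1) - N*X*(z^2-1))"
    by (simp add: algebra_simps power2_eq_square)
  also have "\<dots> = 0" using h by simp
  finally have "(1-\<rho>^2)*z + N*(1-\<rho>*z)*(z-\<rho>) = 0" using Xz by simp
  thus ?thesis by (simp add: algebra_simps)
qed

lemma alg1c:
  fixes X z \<rho> N :: complex
  assumes s: "\<rho>*(X + z) = X*z + 1" and d: "(N+1)*X*z - N*\<rho>*X - \<rho>*z = 0"
  shows "z*(X^2-1) = -N*X*(z^2-1)"
proof -
  have "0 = ((N+1)*X*z - N*\<rho>*X - \<rho>*z)*(X + z)" using d by simp
  also have "\<dots> = (N+1)*X*z*(X+z) - (N*X + z)*(\<rho>*(X+z))" by (simp add: algebra_simps)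
  also have "\<dots> = (N+1)*X*z*(X+z) - (N*X + z)*(X*z+1)" using s by simp
  also have "\<dots> = z*(X^2-1) + N*X*(z^2-1)" by (simp add: algebra_simps power2_eq_square)
  finally show ?thesis by (simp add: algebra_simps eq_neg_iff_add_eq_0)
qed

lemma alg2c:
  fixes X z \<rho> N :: complex
  assumes s: "\<rho>*(X + z) = X*z + 1" and h: "z*(X^2-1) = -N*X*(z^2-1)" and z: "z^2 \<noteq> 1"
  shows "(1-\<rho>^2)*z = -N*(1-\<rho>*z)*(z-\<rho>)"
proof -
  have Xz: "X + z \<noteq> 0"
  proof
    assume "X + z = 0"
    with s have "z*z - 1 = 0" by (simp add: algebra_simps add_eq_0_iff2)
    thus False using z by (simp add: power2_eq_square)
  qed
  have "(X+z)^2 * ((1-\<rho>^2)*z + N*(1-\<rho>*z)*(z-\<rho>)) =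
     z*((X+z)^2 - (\<rho>*(X+z))^2) + N*((X+z) - z*(\<rho>*(X+z)))*(z*(X+z) - \<rho>*(X+z))"
    by (simp add: algebra_simps power2_eq_square)
  also have "\<dots> = z*((X+z)^2 - (X*z+1)^2) + N*((X+z) - z*(X*z+1))*(z*(X+z) - (X*z+1))"
    unfolding s ..
  also have "\<dots> = (1-z^2)*(z*(X^2-1) + N*X*(z^2-1))"
    by (simp add: algebra_simps power2_eq_square)
  also have "\<dots> = 0" using h by simp
  finally have "(1-\<rho>^2)*z + N*(1-\<rho>*z)*(z-\<rho>) = 0" using Xz by simp
  thus ?thesis by (simp add: algebra_simps)
qed

lemma ord_le2:
  fixes p :: "complex poly"
  assumes "poly p z \<noteq> 0 \<or> poly (pderiv p) z \<noteq> 0 \<or> poly (pderiv (pderiv p)) z \<noteq> 0"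
  shows "order z p \<le> 2"
  using assms ord_le_deriv[of 0 p z] ord_le_deriv[of 1 p z] ord_le_deriv[of 2 p z]
  by (auto simp: numeral_2_eq_2)

lemma ord_le3:
  fixes p :: "complex poly"
  assumes "poly (pderiv (pderiv p)) z \<noteq> 0 \<or> poly (pderiv (pderiv (pderiv p))) z \<noteq> 0"
  shows "order z p \<le> 3"
  using assms ord_le_deriv[of 2 p z] ord_le_deriv[of 3 p z]
  by (auto simp: numeral_2_eq_2 numeral_3_eq_3)

lemma poly_dS: "poly (pderiv (Sp \<rho> (Suc (Suc k)))) z = (of_nat k + 3) * z^k*z^2 - \<rho> * (of_nat k + 2) * z^k*z + \<rho>"
  by (simp add: pderiv_Sp poly_monom power2_eq_square)
lemma poly_dC: "poly (pderiv (Cp \<rho> (Suc (Suc k)))) z = (of_nat k + 3) * z^k*z^2 - \<rho> * (of_nat k + 2) * z^k*z - \<rho>"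
  by (simp add: pderiv_Cp poly_monom power2_eq_square)
lemma poly_d2S: "poly (pderiv (pderiv (Sp \<rho> (Suc (Suc k))))) z = (of_nat k + 3) * (of_nat k + 2) * z^k*z - \<rho> * (of_nat k + 2) * (of_nat k + 1) * z^k"
  by (simp add: pderiv2_Sp poly_monom)
lemma poly_S': "poly (Sp \<rho> (Suc (Suc k))) z = z^k*z^2*z - \<rho>*z^k*z^2 + \<rho>*z - 1"
  by (simp add: poly_Sp sv_def power2_eq_square algebra_simps)
lemma poly_C': "poly (Cp \<rho> (Suc (Suc k))) z = z^k*z^2*z - \<rho>*z^k*z^2 - \<rho>*z + 1"
  by (simp add: poly_Cp cv_def power2_eq_square algebra_simps)

lemma no_common_root:
  assumes r: "\<rho> \<noteq> 0" "\<rho>^2 \<noteq> 1" and s: "sv \<rho> n z = 0"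
  shows "cv \<rho> n z \<noteq> 0"
proof
  assume c: "cv \<rho> n z = 0"
  have "sv \<rho> n z - cv \<rho> n z = 2*(\<rho>*z - 1)" by (simp add: sv_def cv_def algebra_simps)
  hence "\<rho> * z = 1" using s c by simp
  hence zr: "z = 1/\<rho>" using r by (simp add: field_simps)
  have "sv \<rho> n z = (1/\<rho>)^(n+1) * (1 - \<rho>^2)"
    unfolding zr sv_def using r by (simp add: field_simps power2_eq_square)
  moreover have "(1/\<rho>)^(n+1) * (1 - \<rho>^2) \<noteq> 0" using r by simp
  ultimately show False using s by simp
qed

lemma nz123: "(of_nat k + 1 :: complex) \<noteq> 0" "(of_nat k + 2 :: complex) \<noteq> 0" "(of_nat k + 3 :: complex) \<noteq> 0"
proof -
  have "of_nat (k+1) \<noteq> (0::complex)" "of_nat (k+2) \<noteq> (0::complex)" "of_nat (k+3) \<noteq> (0::complex)"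
    by (simp_all only: of_nat_eq_0_iff)
  thus "(of_nat k + 1 :: complex) \<noteq> 0" "(of_nat k + 2 :: complex) \<noteq> 0" "(of_nat k + 3 :: complex) \<noteq> 0"
    by (simp_all add: add.commute)
qed

lemma ord_pm1_aux:
  assumes r: "\<rho> \<noteq> 0" and z: "z^2 = 1"
  shows "poly (pderiv (pderiv (Sp \<rho> (Suc (Suc k))))) z \<noteq> 0 \<or> poly (pderiv (pderiv (pderiv (Sp \<rho> (Suc (Suc k)))))) z \<noteq> 0"
proof (rule ccontr)
  define K where "K = (of_nat k :: complex)"
  have nz: "K+1 \<noteq> 0" "K+2 \<noteq> 0" "K+3 \<noteq> 0" unfolding K_def by (rule nz123)+
  have zz: "z*z = 1" using z by (simp add: power2_eq_square)
  have z0: "z \<noteq> 0" using zz by auto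
  have Y: "z^k \<noteq> 0" using z0 by simp
  assume "\<not> ?thesis"
  hence a: "poly (pderiv (pderiv (Sp \<rho> (Suc (Suc k))))) z = 0" and b: "poly (pderiv (pderiv (pderiv (Sp \<rho> (Suc (Suc k)))))) z = 0" by auto
  from a have "(K+3)*(K+2)*z^k*z - \<rho>*(K+2)*(K+1)*z^k = 0"
    unfolding poly_d2S K_def .
  hence "((K+2) * z^k) * ((K+3)*z - \<rho>*(K+1)) = 0"
    by (simp add: algebra_simps)
  hence a': "\<rho>*(K+1) = (K+3)*z" using Y nz z0 by auto
  show False
  proof (cases k)
    case 0
    from b have "(6::complex) = 0" unfolding 0 by (simp add: pderiv3_Sp poly_monom)
    thus False by simp
  next
    case (Suc j)
    have zj: "z^j = z^k * z" unfolding Suc using zz by (simp add: algebra_simps)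
    have kj: "k - 1 = j" using Suc by simp
    from b have "(K+3)*(K+2)*(K+1)*z^k + (-\<rho>*(K+2)*(K+1)*K)*(z^k*z) = 0"
      unfolding pderiv3_Sp poly_add poly_monom K_def kj zj by simp
    hence "((K+2)*(K+1)*z^k)*((K+3) - \<rho>*K*z) = 0" by (simp add: algebra_simps)
    hence b': "\<rho>*K*z = K+3" using Y nz z0 by auto
    have "\<rho>*(K+1)*z = (K+3)*(z*z)" using a' by simp
    hence "\<rho>*K*z + \<rho>*z = K+3" using zz by (simp add: algebra_simps)
    hence "\<rho>*z = 0" using b' by simp
    thus False using r z0 by simp
  qed
qed

lemma ord_pm1:
  assumes r: "\<rho> \<noteq> 0" and z: "z^2 = 1"
  shows "order z (Sp \<rho> (Suc (Suc k))) \<le> 3" "order z (Cp \<rho> (Suc (Suc k))) \<le> 3"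
  using ord_le3[OF ord_pm1_aux[OF r z]] ord_le3[of "Cp \<rho> (Suc (Suc k))" z] ord_pm1_aux[OF r z]
  unfolding pderiv2_Cp by auto

lemma ord_S_le2:
  assumes z: "z^2 \<noteq> 1" "z \<noteq> 0"
  shows "order z (Sp \<rho> (Suc (Suc k))) \<le> 2"
proof (rule ord_le2, rule ccontr)
  define K where "K = (of_nat k :: complex)"
  have nz: "K+1 \<noteq> 0" "K+2 \<noteq> 0" "K+3 \<noteq> 0" unfolding K_def by (rule nz123)+
  have Y: "z^k \<noteq> 0" using z by simp
  assume "\<not> (poly (Sp \<rho> (Suc (Suc k))) z \<noteq> 0 \<or> poly (pderiv (Sp \<rho> (Suc (Suc k)))) z \<noteq> 0 \<or> poly (pderiv (pderiv (Sp \<rho> (Suc (Suc k))))) z \<noteq> 0)"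
  hence s0: "z^k*z^2*z - \<rho>*z^k*z^2 + \<rho>*z - 1 = 0"
    and s1: "(K + 3) * z^k*z^2 - \<rho> * (K + 2) * z^k*z + \<rho> = 0"
    and s2: "(K+3)*(K+2)*z^k*z - \<rho>*(K+2)*(K+1)*z^k = 0"
    unfolding poly_S' poly_dS poly_d2S K_def by auto
  from s2 have "((K+2) * z^k) * ((K+3)*z - \<rho>*(K+1)) = 0" by (simp add: algebra_simps)
  hence a': "\<rho>*(K+1) = (K+3)*z" using Y nz z by auto
  have "0 = (K+1) * ((K + 3) * z^k*z^2 - \<rho> * (K + 2) * z^k*z + \<rho>)" using s1 by simp
  also have "\<dots> = (K+1)*(K + 3) * z^k*z^2 - (\<rho>*(K+1)) * (K + 2) * z^k*z + \<rho>*(K+1)" by (simp add: algebra_simps)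
  also have "\<dots> = (K+3) * (z - z^k*z*z)" unfolding a' by (simp add: algebra_simps power2_eq_square)
  finally have "(K+3)*(z - z^k*z*z) = 0" by simp
  hence "z - z^k*z*z = 0" using nz by simp
  hence "z*(1 - z^k*z) = 0" by (simp add: algebra_simps)
  hence "1 - z^k*z = 0" using z by simp
  hence "z^k * z = 1" by simp
  hence "z^k*z^2*z - \<rho>*z^k*z^2 + \<rho>*z - 1 = z^2 - 1"
    by (simp add: power2_eq_square algebra_simps)
  thus False using s0 z by simp
qed

lemma ord_C_le2:
  assumes z: "z^2 \<noteq> 1" "z \<noteq> 0"
  shows "order z (Cp \<rho> (Suc (Suc k))) \<le> 2"
proof (rule ord_le2, rule ccontr)
  define K where "K = (of_nat k :: complex)"
  have nz: "K+1 \<noteq> 0" "K+2 \<noteq> 0" "K+3 \<noteq> 0" unfolding K_def by (rule nz123)+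
  have Y: "z^k \<noteq> 0" using z by simp
  assume "\<not> (poly (Cp \<rho> (Suc (Suc k))) z \<noteq> 0 \<or> poly (pderiv (Cp \<rho> (Suc (Suc k)))) z \<noteq> 0 \<or> poly (pderiv (pderiv (Cp \<rho> (Suc (Suc k))))) z \<noteq> 0)"
  hence s0: "z^k*z^2*z - \<rho>*z^k*z^2 - \<rho>*z + 1 = 0"
    and s1: "(K + 3) * z^k*z^2 - \<rho> * (K + 2) * z^k*z - \<rho> = 0"
    and s2: "(K+3)*(K+2)*z^k*z - \<rho>*(K+2)*(K+1)*z^k = 0"
    unfolding poly_C' poly_dC pderiv2_Cp poly_d2S K_def by auto
  from s2 have "((K+2) * z^k) * ((K+3)*z - \<rho>*(K+1)) = 0" by (simp add: algebra_simps)
  hence a': "\<rho>*(K+1) = (K+3)*z" using Y nz z by auto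
  have "0 = (K+1) * ((K + 3) * z^k*z^2 - \<rho> * (K + 2) * z^k*z - \<rho>)" using s1 by simp
  also have "\<dots> = (K+1)*(K + 3) * z^k*z^2 - (\<rho>*(K+1)) * (K + 2) * z^k*z - \<rho>*(K+1)" by (simp add: algebra_simps)
  also have "\<dots> = - (K+3) * (z + z^k*z*z)" unfolding a' by (simp add: algebra_simps power2_eq_square)
  finally have "- (K+3) * (z + z^k*z*z) = 0" by (rule sym)
  hence "(K+3) * (z + z^k*z*z) = 0" by (simp only: mult_minus_left neg_equal_0_iff_equal)
  hence "z + z^k*z*z = 0" using nz by simp
  hence "z*(1 + z^k*z) = 0" by (simp add: algebra_simps)
  hence "1 + z^k*z = 0" using z by simp
  hence "z^k * z = -1" by (simp add: add_eq_0_iff)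
  hence "z^k*z^2*z - \<rho>*z^k*z^2 - \<rho>*z + 1 = 1 - z^2"
    by (simp add: power2_eq_square algebra_simps)
  thus False using s0 z by simp
qed

lemma alg1_rev:
  fixes X z \<rho> N :: complex
  assumes s: "\<rho>*(X - z) = X*z - 1" and h: "z*(X^2-1) = N*X*(z^2-1)" and z: "z^2 \<noteq> 1"
  shows "(N+1)*X*z - N*\<rho>*X + \<rho>*z = 0"
proof -
  have Xz: "X - z \<noteq> 0"
  proof
    assume "X - z = 0"
    with s have "z*z - 1 = 0" by (simp add: algebra_simps)
    thus False using z by (simp add: power2_eq_square)
  qed
  have "((N+1)*X*z - N*\<rho>*X + \<rho>*z)*(X - z) = (N+1)*X*z*(X-z) - (N*X - z)*(\<rho>*(X-z))" by (simp add: algebra_simps)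
  also have "\<dots> = (N+1)*X*z*(X-z) - (N*X - z)*(X*z-1)" using s by simp
  also have "\<dots> = z*(X^2-1) - N*X*(z^2-1)" by (simp add: algebra_simps power2_eq_square)
  also have "\<dots> = 0" using h by simp
  finally show ?thesis using Xz by simp
qed

lemma alg1c_rev:
  fixes X z \<rho> N :: complex
  assumes s: "\<rho>*(X + z) = X*z + 1" and h: "z*(X^2-1) = -N*X*(z^2-1)" and z: "z^2 \<noteq> 1"
  shows "(N+1)*X*z - N*\<rho>*X - \<rho>*z = 0"
proof -
  have Xz: "X + z \<noteq> 0"
  proof
    assume "X + z = 0"
    hence "X = -z" by (simp add: add_eq_0_iff2)
    with s have "z*z - 1 = 0" by (simp add: algebra_simps)
    thus False using z by (simp add: power2_eq_square)
  qed
  have "((N+1)*X*z - N*\<rho>*X - \<rho>*z)*(X + z) = (N+1)*X*z*(X+z) - (N*X + z)*(\<rho>*(X+z))" by (simp add: algebra_simps)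
  also have "\<dots> = (N+1)*X*z*(X+z) - (N*X + z)*(X*z+1)" using s by simp
  also have "\<dots> = z*(X^2-1) + N*X*(z^2-1)" by (simp add: algebra_simps power2_eq_square)
  also have "\<dots> = 0" using h by simp
  finally show ?thesis using Xz by simp
qed

lemma sv_X: "sv \<rho> n z = 0 \<longleftrightarrow> \<rho>*(z^n - z) = z^n*z - 1"
  unfolding sv_def by (auto simp: algebra_simps)
lemma cv_X: "cv \<rho> n z = 0 \<longleftrightarrow> \<rho>*(z^n + z) = z^n*z + 1"
  unfolding cv_def by (auto simp: algebra_simps)

lemma zdS: "z * poly (pderiv (Sp \<rho> (Suc (Suc k)))) z = (of_nat (Suc (Suc k))+1)*z^(Suc (Suc k))*z - of_nat (Suc (Suc k))*\<rho>*z^(Suc (Suc k)) + \<rho>*z"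
  unfolding poly_dS by (simp add: algebra_simps power2_eq_square)
lemma zdC: "z * poly (pderiv (Cp \<rho> (Suc (Suc k)))) z = (of_nat (Suc (Suc k))+1)*z^(Suc (Suc k))*z - of_nat (Suc (Suc k))*\<rho>*z^(Suc (Suc k)) - \<rho>*z"
  unfolding poly_dC by (simp add: algebra_simps power2_eq_square)

definition h1 :: "nat \<Rightarrow> complex \<Rightarrow> bool" where
  "h1 n z \<longleftrightarrow> z*((z^n)^2-1) = of_nat n*z^n*(z^2-1)"
definition h2 :: "nat \<Rightarrow> complex \<Rightarrow> bool" where
  "h2 n z \<longleftrightarrow> z*((z^n)^2-1) = -of_nat n*z^n*(z^2-1)"

lemma S_double:
  assumes z: "z^2 \<noteq> 1" "z \<noteq> 0" and o: "order z (Sp \<rho> (Suc (Suc k))) \<ge> 2"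
  shows "sv \<rho> (Suc (Suc k)) z = 0" "h1 (Suc (Suc k)) z"
    "(1-\<rho>^2)*z = -of_nat (Suc (Suc k))*(1-\<rho>*z)*(z-\<rho>)"
proof -
  note g = ord_ge2[OF Sp_nz o]
  show s: "sv \<rho> (Suc (Suc k)) z = 0" using g(1) by (simp add: poly_Sp)
  have d: "(of_nat (Suc (Suc k))+1)*z^(Suc (Suc k))*z - of_nat (Suc (Suc k))*\<rho>*z^(Suc (Suc k)) + \<rho>*z = 0"
    using zdS[of z \<rho> k] g(2) by simp
  show h: "h1 (Suc (Suc k)) z" unfolding h1_def by (rule alg1[OF s[unfolded sv_X] d])
  show "(1-\<rho>^2)*z = -of_nat (Suc (Suc k))*(1-\<rho>*z)*(z-\<rho>)"
    by (rule alg2[OF s[unfolded sv_X] h[unfolded h1_def] z(1)])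
qed

lemma C_double:
  assumes z: "z^2 \<noteq> 1" "z \<noteq> 0" and o: "order z (Cp \<rho> (Suc (Suc k))) \<ge> 2"
  shows "cv \<rho> (Suc (Suc k)) z = 0" "h2 (Suc (Suc k)) z"
    "(1-\<rho>^2)*z = -of_nat (Suc (Suc k))*(1-\<rho>*z)*(z-\<rho>)"
proof -
  note g = ord_ge2[OF Cp_nz o]
  show s: "cv \<rho> (Suc (Suc k)) z = 0" using g(1) by (simp add: poly_Cp)
  have d: "(of_nat (Suc (Suc k))+1)*z^(Suc (Suc k))*z - of_nat (Suc (Suc k))*\<rho>*z^(Suc (Suc k)) - \<rho>*z = 0"
    using zdC[of z \<rho> k] g(2) by simp
  show h: "h2 (Suc (Suc k)) z" unfolding h2_def by (rule alg1c[OF s[unfolded cv_X] d])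
  show "(1-\<rho>^2)*z = -of_nat (Suc (Suc k))*(1-\<rho>*z)*(z-\<rho>)"
    by (rule alg2c[OF s[unfolded cv_X] h[unfolded h2_def] z(1)])
qed

lemma S_double_rev:
  assumes z: "z^2 \<noteq> 1" "z \<noteq> 0" and s: "sv \<rho> (Suc (Suc k)) z = 0" and h: "h1 (Suc (Suc k)) z"
  shows "order z (Sp \<rho> (Suc (Suc k))) \<ge> 2"
proof -
  have d: "(of_nat (Suc (Suc k))+1)*z^(Suc (Suc k))*z - of_nat (Suc (Suc k))*\<rho>*z^(Suc (Suc k)) + \<rho>*z = 0"
    by (rule alg1_rev[OF s[unfolded sv_X] h[unfolded h1_def] z(1)])
  hence d': "poly (pderiv (Sp \<rho> (Suc (Suc k)))) z = 0" using zdS[of z \<rho> k] z by simp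
  have p0: "poly (Sp \<rho> (Suc (Suc k))) z = 0" using s by (simp add: poly_Sp)
  have "coeff (pderiv (Sp \<rho> (Suc (Suc k)))) (Suc (Suc k)) = of_nat k + 3"
    unfolding pderiv_Sp by (simp add: coeff_monom)
  hence "pderiv (Sp \<rho> (Suc (Suc k))) \<noteq> 0" using nz123(3)[of k] by auto
  hence "order z (pderiv (Sp \<rho> (Suc (Suc k)))) \<noteq> 0" using d' order_root by blast
  thus ?thesis using order_pderiv[OF Sp_nz p0] by simp
qed

lemma C_double_rev:
  assumes z: "z^2 \<noteq> 1" "z \<noteq> 0" and s: "cv \<rho> (Suc (Suc k)) z = 0" and h: "h2 (Suc (Suc k)) z"
  shows "order z (Cp \<rho> (Suc (Suc k))) \<ge> 2"
proof -
  have d: "(of_nat (Suc (Suc k))+1)*z^(Suc (Suc k))*z - of_nat (Suc (Suc k))*\<rho>*z^(Suc (Suc k)) - \<rho>*z = 0"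
    by (rule alg1c_rev[OF s[unfolded cv_X] h[unfolded h2_def] z(1)])
  hence d': "poly (pderiv (Cp \<rho> (Suc (Suc k)))) z = 0" using zdC[of z \<rho> k] z by simp
  have p0: "poly (Cp \<rho> (Suc (Suc k))) z = 0" using s by (simp add: poly_Cp)
  have "coeff (pderiv (Cp \<rho> (Suc (Suc k)))) (Suc (Suc k)) = of_nat k + 3"
    unfolding pderiv_Cp by (simp add: coeff_monom)
  hence "pderiv (Cp \<rho> (Suc (Suc k))) \<noteq> 0" using nz123(3)[of k] by auto
  hence "order z (pderiv (Cp \<rho> (Suc (Suc k)))) \<noteq> 0" using d' order_root by blast
  thus ?thesis using order_pderiv[OF Cp_nz p0] by simp
qed

lemma D_order: "order z [:-1,0,1::complex:] = (if z^2 = 1 then 1 else 0)"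
proof -
  have e: "[:-1,0,1::complex:] = [:-1,1:] * [:-(-1),1:]" by simp
  have "order z [:-1,0,1::complex:] = order z [:-1,1::complex:] + order z [:-(-1),1::complex:]"
    unfolding e by (rule order_mult, simp)
  also have "\<dots> = (if z^2 = 1 then 1 else 0)"
    unfolding order_lin by (auto simp: power2_eq_1_iff)
  finally show ?thesis .
qed

lemma orders_eq:
  assumes r: "\<rho> \<noteq> 0" "\<rho>^2 \<noteq> 1" and n: "n \<noteq> 0"
  shows "order z (Gp \<rho> n) + order z [:-1,0,1:] = order z (Sp \<rho> n) + order z (Cp \<rho> n)"
proof -
  have c1: "1 - \<rho>^2 \<noteq> 0" using r by simp
  have c2: "(\<rho>*(1-\<rho>^2))^n \<noteq> 0" using r by simp
  have SC: "Sp \<rho> n * Cp \<rho> n \<noteq> 0" using Sp_nz[OF n] Cp_nz[OF n] by simp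
  note GI = G_identity[OF r(1), of n]
  have GD: "Gp \<rho> n * [:-1,0,1:] \<noteq> 0"
  proof
    assume "Gp \<rho> n * [:-1,0,1:] = 0"
    hence "Polynomial.smult ((\<rho>*(1-\<rho>^2))^n) (Sp \<rho> n * Cp \<rho> n) = 0" using GI by simp
    thus False using SC c2 by simp
  qed
  have "order z (Gp \<rho> n) + order z [:-1,0,1:] = order z (Gp \<rho> n * [:-1,0,1:])"
    by (rule order_mult[symmetric], rule GD)
  also have "\<dots> = order z (Polynomial.smult (1-\<rho>^2) (Gp \<rho> n * [:-1,0,1:]))"
    by (rule order_smult[symmetric], rule c1)
  also have "\<dots> = order z (Polynomial.smult ((\<rho>*(1-\<rho>^2))^n) (Sp \<rho> n * Cp \<rho> n))" unfolding GI ..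
  also have "\<dots> = order z (Sp \<rho> n * Cp \<rho> n)" by (rule order_smult, rule c2)
  also have "\<dots> = order z (Sp \<rho> n) + order z (Cp \<rho> n)" by (rule order_mult, rule SC)
  finally show ?thesis .
qed

lemma P0:
  assumes "\<rho>^2 \<noteq> 1"
  shows "poly (Pc \<rho> n) 0 \<noteq> 0"
proof -
  have "det (Mx \<rho> (Suc m) 0) \<noteq> 0 \<and> det (Mx \<rho> (Suc (Suc m)) 0) \<noteq> 0" for m
  proof (induction m)
    case 0
    have "det (Mx \<rho> (Suc (Suc 0)) 0) = -(1-\<rho>^2) * det (Mx \<rho> (Suc 0) 0)" using Mx_rec[of \<rho> 0 0] by simp
    thus ?case using assms by (simp add: Mx1)
  next
    case (Suc m)
    have "det (Mx \<rho> (Suc (Suc (Suc m))) 0) = -(1-\<rho>^2) * det (Mx \<rho> (Suc (Suc m)) 0)" using Mx_rec[of \<rho> "Suc m" 0] by simp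
    thus ?case using Suc assms by simp
  qed
  hence "det (Mx \<rho> n 0) \<noteq> 0" by (cases n, auto simp: Mx0)
  thus ?thesis by (simp add: poly_Pc)
qed

lemma root_exists:
  assumes r: "\<rho> \<noteq> 0" and l: "l \<noteq> 0"
  shows "\<exists>z. poly (Ap \<rho> - Polynomial.smult l (Qp \<rho>)) z = 0"
proof (rule fundamental_theorem_of_algebra)
  have "coeff (Ap \<rho> - Polynomial.smult l (Qp \<rho>)) 2 = l * \<rho>"
    by (simp add: Ap_def Qp_def numeral_2_eq_2)
  hence "coeff (Ap \<rho> - Polynomial.smult l (Qp \<rho>)) 2 \<noteq> 0" using r l by simp
  hence "2 \<le> degree (Ap \<rho> - Polynomial.smult l (Qp \<rho>))" by (rule le_degree)
  thus "\<not> constant (poly (Ap \<rho> - Polynomial.smult l (Qp \<rho>)))" by (subst constant_degree, simp)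
qed

lemma part1:
  assumes r: "\<rho> \<noteq> 0" "\<rho>^2 \<noteq> 1" and o: "order l (Pc \<rho> (Suc (Suc k))) \<ge> 2"
  shows "l = - of_nat (Suc (Suc k)) \<and> order l (Pc \<rho> (Suc (Suc k))) = 2"
proof -
  define n where "n = Suc (Suc k)"
  define m where "m = order l (Pc \<rho> n)"
  have m2: "m \<ge> 2" using o unfolding m_def n_def .
  have "poly (Pc \<rho> n) l = 0" using ord_ge2(1)[OF Pc_nz m2[unfolded m_def]] .
  hence l0: "l \<noteq> 0" using P0[OF r(2)] by auto
  obtain z0 where root: "poly (Ap \<rho> - Polynomial.smult l (Qp \<rho>)) z0 = 0" using root_exists[OF r(1) l0] by blast
  have z0: "z0 \<noteq> 0" using quad_factor(1)[OF r(1) l0 root] .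
  have rootv: "(1-\<rho>^2)*z0 = l * ((1-\<rho>*z0)*(z0-\<rho>))" using root by (simp add: poly_Ap poly_Qp)
  have Q0: "(1-\<rho>*z0)*(z0-\<rho>) \<noteq> 0"
  proof
    assume "(1-\<rho>*z0)*(z0-\<rho>) = 0"
    hence "(1-\<rho>^2)*z0 = 0" using rootv by simp
    thus False using z0 r(2) by simp
  qed
  have oG: "order z0 (Gp \<rho> n) = m * (if z0^2 = 1 then 2 else 1)"
    unfolding m_def order_relation[OF r l0 root] order_quad[OF r(1) l0 root] ..
  have oe: "order z0 (Gp \<rho> n) + (if z0^2 = 1 then 1 else 0) = order z0 (Sp \<rho> n) + order z0 (Cp \<rho> n)"
    using orders_eq[OF r, of n z0] D_order[of z0] unfolding n_def by simp
  have one0: "order z0 (Sp \<rho> n) = 0 \<or> order z0 (Cp \<rho> n) = 0"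
  proof (cases "sv \<rho> n z0 = 0")
    case True
    hence "poly (Cp \<rho> n) z0 \<noteq> 0" using no_common_root[OF r True] by (simp add: poly_Cp)
    thus ?thesis using order_root by blast
  next
    case False
    hence "poly (Sp \<rho> n) z0 \<noteq> 0" by (simp add: poly_Sp)
    thus ?thesis using order_root by blast
  qed
  show ?thesis
  proof (cases "z0^2 = 1")
    case True
    have "order z0 (Sp \<rho> n) \<le> 3" "order z0 (Cp \<rho> n) \<le> 3" unfolding n_def using ord_pm1[OF r(1) True] by auto
    hence "2*m + 1 \<le> 3" using oe oG True one0 by auto
    thus ?thesis using m2 by simp
  next
    case False
    have eq: "m = order z0 (Sp \<rho> n) + order z0 (Cp \<rho> n)" using oe oG False by simp
    have key: "(1-\<rho>^2)*z0 = -of_nat n*(1-\<rho>*z0)*(z0-\<rho>) \<and> m = 2"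
    proof (cases "order z0 (Cp \<rho> n) = 0")
      case True
      hence "order z0 (Sp \<rho> n) \<ge> 2" using eq m2 by simp
      moreover have "order z0 (Sp \<rho> n) \<le> 2" unfolding n_def by (rule ord_S_le2[OF False z0])
      ultimately show ?thesis using S_double(3)[OF False z0] True eq unfolding n_def by simp
    next
      case False2: False
      hence "order z0 (Sp \<rho> n) = 0" using one0 by simp
      hence "order z0 (Cp \<rho> n) \<ge> 2" using eq m2 by simp
      moreover have "order z0 (Cp \<rho> n) \<le> 2" unfolding n_def by (rule ord_C_le2[OF False z0])
      ultimately show ?thesis using C_double(3)[OF False z0] \<open>order z0 (Sp \<rho> n) = 0\<close> eq unfolding n_def by simp
    qed
    have "l * ((1-\<rho>*z0)*(z0-\<rho>)) = (1-\<rho>^2)*z0" using rootv by simp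
    also have "\<dots> = (-of_nat n) * ((1-\<rho>*z0)*(z0-\<rho>))" using key by (simp only: mult.assoc)
    finally have "l * ((1-\<rho>*z0)*(z0-\<rho>)) = (-of_nat n) * ((1-\<rho>*z0)*(z0-\<rho>))" .
    hence "l = -of_nat n" using Q0 by (rule mult_right_cancel[THEN iffD1, rotated])
    thus ?thesis using key unfolding m_def n_def by simp
  qed
qed

lemma double_to_mult:
  assumes r: "\<rho> \<noteq> 0" "\<rho>^2 \<noteq> 1" and z: "z^2 \<noteq> 1" "z \<noteq> 0"
    and o: "order z (Sp \<rho> (Suc (Suc k))) \<ge> 2 \<or> order z (Cp \<rho> (Suc (Suc k))) \<ge> 2"
  shows "order (- of_nat (Suc (Suc k))) (Pc \<rho> (Suc (Suc k))) \<ge> 2"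
proof -
  define n where "n = Suc (Suc k)"
  have eqv: "(1-\<rho>^2)*z = -of_nat n*(1-\<rho>*z)*(z-\<rho>)"
    using o S_double(3)[OF z] C_double(3)[OF z] unfolding n_def by blast
  have l0: "- of_nat n \<noteq> (0::complex)" unfolding n_def by (simp del: of_nat_Suc)
  have root: "poly (Ap \<rho> - Polynomial.smult (- of_nat n) (Qp \<rho>)) z = 0"
    using eqv by (simp add: poly_Ap poly_Qp algebra_simps)
  have "order z (Gp \<rho> n) = order (- of_nat n) (Pc \<rho> n)"
    using order_relation[OF r l0 root] order_quad[OF r(1) l0 root] z by simp
  moreover have "order z (Gp \<rho> n) = order z (Sp \<rho> n) + order z (Cp \<rho> n)"
    using orders_eq[OF r, of n z] D_order[of z] z unfolding n_def by simp
  ultimately show ?thesis using o unfolding n_def by auto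
qed

lemma sin_w: "sin (of_nat m * x) = (exp (\<i>*x)^m - 1/exp (\<i>*x)^m) / (2*\<i>)"
proof -
  have "exp (\<i> * (of_nat m * x)) = exp (\<i>*x)^m" by (simp add: exp_of_nat_mult[symmetric] algebra_simps)
  moreover have "exp (-(\<i> * (of_nat m * x))) = 1/exp (\<i>*x)^m" by (simp add: exp_minus exp_of_nat_mult[symmetric] algebra_simps inverse_eq_divide)
  ultimately show ?thesis by (simp add: sin_exp_eq)
qed

lemma cos_w: "cos (of_nat m * x) = (exp (\<i>*x)^m + 1/exp (\<i>*x)^m) / 2"
proof -
  have "exp (\<i> * (of_nat m * x)) = exp (\<i>*x)^m" by (simp add: exp_of_nat_mult[symmetric] algebra_simps)
  moreover have "exp (-(\<i> * (of_nat m * x))) = 1/exp (\<i>*x)^m" by (simp add: exp_minus exp_of_nat_mult[symmetric] algebra_simps inverse_eq_divide)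
  ultimately show ?thesis by (simp add: cos_exp_eq)
qed

lemma trig_conv:
  fixes \<mu> :: complex
  assumes n: "n = Suc m"
  defines "w \<equiv> exp (\<i>*(\<mu>/2))"
  defines "z \<equiv> w^2"
  shows "z \<noteq> 0"
    and "sin \<mu> \<noteq> 0 \<longleftrightarrow> z^2 \<noteq> 1"
    and "sin (\<mu> * (of_nat n + 1) / 2) - \<rho> * sin (\<mu> * (of_nat n - 1) / 2) = 0 \<longleftrightarrow> sv \<rho> n z = 0"
    and "cos (\<mu> * (of_nat n + 1) / 2) - \<rho> * cos (\<mu> * (of_nat n - 1) / 2) = 0 \<longleftrightarrow> cv \<rho> n z = 0"
    and "sin \<mu> \<noteq> 0 \<Longrightarrow> (- of_nat n = - sin (of_nat n * \<mu>) / sin \<mu> \<longleftrightarrow> h1 n z)"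
    and "sin \<mu> \<noteq> 0 \<Longrightarrow> (- of_nat n = sin (of_nat n * \<mu>) / sin \<mu> \<longleftrightarrow> h2 n z)"
proof -
  have w0: "w \<noteq> 0" unfolding w_def by simp
  show z0: "z \<noteq> 0" unfolding z_def using w0 by simp
  have a1: "\<mu> = of_nat 2 * (\<mu>/2)" by simp
  have a2: "\<mu> * (of_nat n + 1) / 2 = of_nat (m+2) * (\<mu>/2)" unfolding n by (simp add: algebra_simps)
  have a3: "\<mu> * (of_nat n - 1) / 2 = of_nat m * (\<mu>/2)" unfolding n by (simp add: algebra_simps)
  have a4: "of_nat n * \<mu> = of_nat (2*n) * (\<mu>/2)" by (simp add: algebra_simps)
  have sm: "sin \<mu> = (z - 1/z)/(2*\<i>)" unfolding z_def w_def by (subst a1, subst sin_w, simp)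
  show s1: "sin \<mu> \<noteq> 0 \<longleftrightarrow> z^2 \<noteq> 1"
  proof -
    have "sin \<mu> = 0 \<longleftrightarrow> z - 1/z = 0" unfolding sm by simp
    also have "\<dots> \<longleftrightarrow> z^2 = 1" using z0 by (simp add: field_simps power2_eq_square)
    finally show ?thesis by simp
  qed
  define V where "V = w^m"
  have V0: "V \<noteq> 0" unfolding V_def using w0 by simp
  have zn: "z^n = V^2 * z" "z^(n+1) = V^2*z^2" unfolding z_def V_def n
    by (simp_all add: power_mult[symmetric] power2_eq_square power_mult_distrib algebra_simps)
  have wm2: "w^(m+2) = V * z" unfolding V_def z_def by (simp add: power_add power2_eq_square)
  have e1: "sin (\<mu> * (of_nat n + 1) / 2) - \<rho> * sin (\<mu> * (of_nat n - 1) / 2)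
      = ((V*z - 1/(V*z)) - \<rho>*(V - 1/V)) / (2*\<i>)"
    unfolding a2 a3 sin_w w_def[symmetric] wm2 V_def[symmetric] by (simp add: field_simps)
  have "((V*z - 1/(V*z)) - \<rho>*(V - 1/V)) * (V*z) = sv \<rho> n z"
    unfolding sv_def zn using V0 z0 by (simp add: field_simps power2_eq_square)
  thus "sin (\<mu> * (of_nat n + 1) / 2) - \<rho> * sin (\<mu> * (of_nat n - 1) / 2) = 0 \<longleftrightarrow> sv \<rho> n z = 0"
    unfolding e1 using V0 z0 by auto
  have e2: "cos (\<mu> * (of_nat n + 1) / 2) - \<rho> * cos (\<mu> * (of_nat n - 1) / 2)
      = ((V*z + 1/(V*z)) - \<rho>*(V + 1/V)) / 2"
    unfolding a2 a3 cos_w w_def[symmetric] wm2 V_def[symmetric] by (simp add: field_simps)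
  have "((V*z + 1/(V*z)) - \<rho>*(V + 1/V)) * (V*z) = cv \<rho> n z"
    unfolding cv_def zn using V0 z0 by (simp add: field_simps power2_eq_square)
  thus "cos (\<mu> * (of_nat n + 1) / 2) - \<rho> * cos (\<mu> * (of_nat n - 1) / 2) = 0 \<longleftrightarrow> cv \<rho> n z = 0"
    unfolding e2 using V0 z0 by auto
  have sn: "sin (of_nat n * \<mu>) = (z^n - 1/z^n)/(2*\<i>)"
    unfolding a4 sin_w w_def[symmetric] z_def by (simp add: power_mult)
  assume "sin \<mu> \<noteq> 0"
  hence zz: "z - 1/z \<noteq> 0" unfolding sm by simp
  have zn0: "z^n \<noteq> 0" using z0 by simp
  have q: "sin (of_nat n * \<mu>) / sin \<mu> = (z^n - 1/z^n)/(z - 1/z)" unfolding sn sm by simp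
  have "- of_nat n = - sin (of_nat n * \<mu>) / sin \<mu> \<longleftrightarrow> of_nat n * (z - 1/z) = z^n - 1/z^n"
    unfolding minus_divide_left[symmetric] neg_equal_iff_equal q using zz by (simp add: eq_divide_eq)
  also have "\<dots> \<longleftrightarrow> of_nat n * (z - 1/z) * (z*z^n) = (z^n - 1/z^n) * (z*z^n)"
    using z0 zn0 by (metis mult_cancel_right mult_eq_0_iff)
  also have "of_nat n * (z - 1/z) * (z*z^n) = of_nat n*z^n*(z^2-1)" using z0 by (simp add: field_simps power2_eq_square)
  also have "(z^n - 1/z^n) * (z*z^n) = z*((z^n)^2-1)" using zn0 by (simp add: field_simps power2_eq_square)
  also have "(of_nat n*z^n*(z^2-1) = z*((z^n)^2-1)) \<longleftrightarrow> h1 n z" unfolding h1_def by auto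
  finally show "- of_nat n = - sin (of_nat n * \<mu>) / sin \<mu> \<longleftrightarrow> h1 n z" .
  have "- of_nat n = sin (of_nat n * \<mu>) / sin \<mu> \<longleftrightarrow> - of_nat n * (z - 1/z) = z^n - 1/z^n"
    unfolding q using zz by (simp add: eq_divide_eq)
  also have "\<dots> \<longleftrightarrow> - of_nat n * (z - 1/z) * (z*z^n) = (z^n - 1/z^n) * (z*z^n)"
    using z0 zn0 by (metis mult_cancel_right mult_eq_0_iff)
  also have "- of_nat n * (z - 1/z) * (z*z^n) = - of_nat n*z^n*(z^2-1)" using z0 by (simp add: field_simps power2_eq_square)
  also have "(z^n - 1/z^n) * (z*z^n) = z*((z^n)^2-1)" using zn0 by (simp add: field_simps power2_eq_square)
  also have "(- of_nat n*z^n*(z^2-1) = z*((z^n)^2-1)) \<longleftrightarrow> h2 n z" unfolding h2_def by auto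
  finally show "- of_nat n = sin (of_nat n * \<mu>) / sin \<mu> \<longleftrightarrow> h2 n z" .
qed

lemma chebU_z:
  assumes z: "z \<noteq> 0"
  shows "poly (chebU k) ((z + 1/z)/2) * (z - 1/z) = z^(k+1) - 1/z^(k+1)"
proof (induction k rule: chebU.induct)
  case 1 thus ?case by simp
next
  case 2 thus ?case using z by (simp add: field_simps power2_eq_square)
next
  case (3 k)
  have g: "(a*P - Q)*c = a*(P*c) - Q*c" for a P Q c :: complex by (simp add: algebra_simps)
  have e: "poly (chebU (Suc (Suc k))) ((z + 1/z)/2) = (z + 1/z) * poly (chebU (Suc k)) ((z + 1/z)/2) - poly (chebU k) ((z + 1/z)/2)"
    by simp
  have "poly (chebU (Suc (Suc k))) ((z + 1/z)/2) * (z - 1/z)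
     = (z + 1/z) * (poly (chebU (Suc k)) ((z + 1/z)/2) * (z - 1/z)) - poly (chebU k) ((z + 1/z)/2) * (z - 1/z)"
    unfolding e by (rule g)
  also have "\<dots> = (z + 1/z) * (z^(Suc k + 1) - 1/z^(Suc k+1)) - (z^(k+1) - 1/z^(k+1))"
    using 3 by simp
  also have "\<dots> = z^(Suc (Suc k) + 1) - 1/z^(Suc (Suc k) + 1)"
    using z by (simp add: field_simps)
  finally show ?case .
qed

lemma chebU_rec_poly: "poly (chebU (Suc (Suc k))) x = 2*x*poly (chebU (Suc k)) x - poly (chebU k) x"
  by simp

lemma chebU_rec_deriv: "poly (pderiv (chebU (Suc (Suc k)))) x = 2*x*poly (pderiv (chebU (Suc k))) x + 2*poly (chebU (Suc k)) x - poly (pderiv (chebU k)) x"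
proof -
  have pd: "pderiv (chebU (Suc (Suc k))) = [:0,2:] * pderiv (chebU (Suc k)) + Polynomial.smult 2 (chebU (Suc k)) - pderiv (chebU k)"
    by (simp add: pderiv_diff pderiv_mult pderiv_pCons pderiv_smult algebra_simps)
  show ?thesis unfolding pd by simp
qed

lemma chebU_1: "poly (chebU k) 1 = of_nat k + 1 \<and> poly (chebU (Suc k)) 1 = of_nat k + 2"
proof (induction k)
  case 0 thus ?case by simp
next
  case (Suc k) thus ?case unfolding chebU_rec_poly by simp
qed

lemma chebU_m1: "poly (chebU k) (-1) = (-1)^k * (of_nat k + 1) \<and> poly (chebU (Suc k)) (-1) = (-1)^(Suc k) * (of_nat k + 2)"
proof (induction k)
  case 0 thus ?case by simp
next
  case (Suc k)
  have "poly (chebU (Suc (Suc k))) (-1) = -2 * ((-1)^(Suc k) * (of_nat k + 2)) - (-1)^k * (of_nat k + 1)"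
    unfolding chebU_rec_poly using Suc by simp
  also have "\<dots> = (-1)^(Suc (Suc k)) * (of_nat (Suc k) + 2)" by (simp add: algebra_simps)
  finally show ?case using Suc by simp
qed

lemma chebU_d1: "3 * poly (pderiv (chebU k)) 1 = of_nat k * (of_nat k + 1) * (of_nat k + 2)
   \<and> 3 * poly (pderiv (chebU (Suc k))) 1 = (of_nat k + 1) * (of_nat k + 2) * (of_nat k + 3)"
proof (induction k)
  case 0 thus ?case by (simp add: pderiv_pCons)
next
  case (Suc k)
  have "3 * poly (pderiv (chebU (Suc (Suc k)))) 1 = 2 * (3 * poly (pderiv (chebU (Suc k))) 1) + 6 * poly (chebU (Suc k)) 1 - 3 * poly (pderiv (chebU k)) 1"
    unfolding chebU_rec_deriv by (simp add: algebra_simps)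
  also have "\<dots> = 2 * ((of_nat k + 1) * (of_nat k + 2) * (of_nat k + 3)) + 6 * (of_nat k + 2) - of_nat k * (of_nat k + 1) * (of_nat k + 2)"
    using Suc chebU_1[of k] by simp
  also have "\<dots> = (of_nat (Suc k) + 1) * (of_nat (Suc k) + 2) * (of_nat (Suc k) + 3)" by (simp add: algebra_simps)
  finally show ?case using Suc by (simp add: algebra_simps)
qed

lemma chebU_dm1: "3 * poly (pderiv (chebU k)) (-1) = (-1)^(Suc k) * (of_nat k * (of_nat k + 1) * (of_nat k + 2))
   \<and> 3 * poly (pderiv (chebU (Suc k))) (-1) = (-1)^k * ((of_nat k + 1) * (of_nat k + 2) * (of_nat k + 3))"
proof (induction k)
  case 0 thus ?case by (simp add: pderiv_pCons)
next
  case (Suc k)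
  have "3 * poly (pderiv (chebU (Suc (Suc k)))) (-1) = -2 * (3 * poly (pderiv (chebU (Suc k))) (-1)) + 6 * poly (chebU (Suc k)) (-1) - 3 * poly (pderiv (chebU k)) (-1)"
    unfolding chebU_rec_deriv by (simp add: algebra_simps)
  also have "\<dots> = -2 * ((-1)^k * ((of_nat k + 1) * (of_nat k + 2) * (of_nat k + 3))) + 6 * ((-1)^(Suc k) * (of_nat k + 2)) - (-1)^(Suc k) * (of_nat k * (of_nat k + 1) * (of_nat k + 2))"
    using Suc chebU_m1[of k] by simp
  also have "\<dots> = (-1)^(Suc k) * ((of_nat (Suc k) + 1) * (of_nat (Suc k) + 2) * (of_nat (Suc k) + 3))" by (simp add: algebra_simps)
  finally show ?case using Suc by (simp add: algebra_simps)
qed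

lemma dvd_lin_root: fixes p :: "complex poly" assumes "poly p c = 0" obtains r where "p = [:-c,1:] * r"
  using assms by (metis dvdE poly_eq_0_iff_dvd)

lemma Ud1_nz: "poly (pderiv (chebU (Suc k))) 1 \<noteq> 0"
proof -
  have "3 * poly (pderiv (chebU (Suc k))) 1 = (of_nat k + 1) * (of_nat k + 2) * (of_nat k + 3)"
    using chebU_d1[of k] by simp
  moreover have "(of_nat k + 1) * (of_nat k + 2) * (of_nat k + 3) \<noteq> (0::complex)" using nz123[of k] by simp
  ultimately show ?thesis by auto
qed

lemma Udm1_nz: "poly (pderiv (chebU (Suc k))) (-1) \<noteq> 0"
proof -
  have "3 * poly (pderiv (chebU (Suc k))) (-1) = (-1)^k * ((of_nat k + 1) * (of_nat k + 2) * (of_nat k + 3))"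
    using chebU_dm1[of k] by simp
  moreover have "(-1)^k * ((of_nat k + 1) * (of_nat k + 2) * (of_nat k + 3)) \<noteq> (0::complex)" using nz123[of k] by simp
  ultimately show ?thesis by auto
qed

lemma U1: "poly (chebU (Suc k)) 1 = of_nat (Suc (Suc k))"
proof -
  have "poly (chebU (Suc k)) 1 = of_nat k + 2" by (rule conjunct2[OF chebU_1[of k]])
  also have "\<dots> = 2 + of_nat k" by (rule add.commute)
  also have "\<dots> = of_nat (Suc (Suc k))" by simp
  finally show ?thesis .
qed
lemma Um1: "poly (chebU (Suc k)) (-1) = (-1)^(Suc k) * of_nat (Suc (Suc k))" using chebU_m1[of k] by (simp add: add.commute)

lemma q1_roots:
  "poly (q1 (Suc (Suc k))) t = 0 \<longleftrightarrow> poly (chebU (Suc k)) t = of_nat (Suc (Suc k)) \<and> t \<noteq> 1 \<and> t \<noteq> -1"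
proof -
  define n where "n = Suc (Suc k)"
  define p where "p = chebU (Suc k) - [:of_nat n:]"
  have pt: "poly p t = 0 \<longleftrightarrow> poly (chebU (Suc k)) t = of_nat n" for t unfolding p_def by simp
  have p1: "poly p 1 = 0" by (simp add: p_def n_def U1)
  have dp: "pderiv p = pderiv (chebU (Suc k))" unfolding p_def by (simp add: pderiv_diff pderiv_pCons)
  obtain r where r: "p = [:-1,1:] * r" using dvd_lin_root[OF p1] by auto
  have nz: "of_nat n \<noteq> (0::complex)" unfolding n_def by (simp del: of_nat_Suc)
  show ?thesis
  proof (cases "even n")
    case True
    have ek: "even k" using True unfolding n_def by simp
    have n1: "n - 1 = Suc k" unfolding n_def by simp
    have pd: "p div [:-1,1:] = r" unfolding r by (rule nonzero_mult_div_cancel_left, simp)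
    have q: "q1 n = r" unfolding q1_def using True
      by (simp only: n1 p_def[symmetric] pd if_True)
    have "poly (pderiv p) 1 = poly r 1" unfolding r pderiv_mult by (simp add: pderiv_pCons)
    hence r1: "poly r 1 \<noteq> 0" using Ud1_nz[of k] dp by simp
    have k2: "(of_nat k :: complex) \<noteq> -2" using nz123(2)[of k] by (simp add: eq_neg_iff_add_eq_0)
    have pm1: "poly p (-1) \<noteq> 0" unfolding p_def n_def using ek k2 by (simp add: Um1)
    have e: "poly p t = (t - 1) * poly r t" for t unfolding r by (simp add: algebra_simps)
    show ?thesis unfolding n_def[symmetric] q pt[symmetric]
      using r1 pm1 unfolding e by auto
  next
    case False
    have ok: "odd k" using False unfolding n_def by simp
    have pm1: "poly p (-1) = 0" unfolding p_def n_def using ok by (simp add: Um1)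
    hence "poly r (-1) = 0" unfolding r by simp
    then obtain r2 where r2: "r = [:1,1:] * r2" using dvd_lin_root[of r "-1"] by auto
    have pr: "p = [:-1,0,1:] * r2" unfolding r r2 by simp
    have n1: "n - 1 = Suc k" unfolding n_def by simp
    have pd: "p div [:-1,0,1:] = r2" unfolding pr by (rule nonzero_mult_div_cancel_left, simp)
    have q: "q1 n = r2" unfolding q1_def using False
      by (simp only: n1 p_def[symmetric] pd if_False)
    have d: "poly (pderiv p) x = 2*x*poly r2 x + (x^2-1)*poly (pderiv r2) x" for x
      unfolding pr pderiv_mult by (simp add: pderiv_pCons algebra_simps power2_eq_square)
    have a: "poly r2 1 \<noteq> 0" using d[of 1] Ud1_nz[of k] dp by auto
    have b: "poly r2 (-1) \<noteq> 0" using d[of "-1"] Udm1_nz[of k] dp by auto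
    have e: "poly p t = (t^2 - 1) * poly r2 t" for t unfolding pr by (simp add: algebra_simps power2_eq_square)
    show ?thesis unfolding n_def[symmetric] q pt[symmetric] e using a b
      by (auto simp: power2_eq_1_iff)
  qed
qed

lemma q2_roots:
  "poly (q2 (Suc (Suc k))) t = 0 \<longleftrightarrow> poly (chebU (Suc k)) t = - of_nat (Suc (Suc k)) \<and> t \<noteq> 1 \<and> t \<noteq> -1"
proof -
  define n where "n = Suc (Suc k)"
  define p where "p = chebU (Suc k) + [:of_nat n:]"
  have pt: "poly p t = 0 \<longleftrightarrow> poly (chebU (Suc k)) t = - of_nat n" for t unfolding p_def by (simp add: add_eq_0_iff2)
  have dp: "pderiv p = pderiv (chebU (Suc k))" unfolding p_def by (simp add: pderiv_add pderiv_pCons)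
  have nz: "of_nat n \<noteq> (0::complex)" unfolding n_def by (simp del: of_nat_Suc)
  have p1: "poly p 1 \<noteq> 0" unfolding p_def using nz unfolding n_def by (simp add: U1 del: of_nat_Suc)
  show ?thesis
  proof (cases "even n")
    case True
    have ek: "even k" using True unfolding n_def by simp
    have pm1: "poly p (-1) = 0" unfolding p_def n_def using ek by (simp add: Um1)
    obtain r where r: "p = [:1,1:] * r" using dvd_lin_root[OF pm1] by auto
    have n1: "n - 1 = Suc k" unfolding n_def by simp
    have pd: "p div [:1,1:] = r" unfolding r by (rule nonzero_mult_div_cancel_left, simp)
    have q: "q2 n = r" unfolding q2_def using True
      by (simp only: n1 p_def[symmetric] pd if_True)
    have "poly (pderiv p) (-1) = poly r (-1)" unfolding r pderiv_mult by (simp add: pderiv_pCons)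
    hence rm1: "poly r (-1) \<noteq> 0" using Udm1_nz[of k] dp by simp
    have e: "poly p t = (t + 1) * poly r t" for t unfolding r by (simp add: algebra_simps)
    show ?thesis unfolding n_def[symmetric] q pt[symmetric]
      using rm1 p1 unfolding e by (auto simp: add_eq_0_iff2)
  next
    case False
    have ok: "odd k" using False unfolding n_def by simp
    have pm1: "poly p (-1) \<noteq> 0" unfolding p_def n_def using ok nz[unfolded n_def] by (simp add: Um1 del: of_nat_Suc)
    have n1: "n - 1 = Suc k" unfolding n_def by simp
    have q: "q2 n = p" unfolding q2_def using False by (simp only: n1 p_def[symmetric] if_False)
    show ?thesis unfolding n_def[symmetric] q pt[symmetric] using p1 pm1 by auto
  qed
qed

lemma type1_iff:
  assumes n: "n = Suc m"
  shows "type1_eig n \<rho> (- of_nat n) \<longleftrightarrow> (\<exists>z. z \<noteq> 0 \<and> z^2 \<noteq> 1 \<and> sv \<rho> n z = 0 \<and> h1 n z)"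
proof
  assume "type1_eig n \<rho> (- of_nat n)"
  then obtain \<mu> :: complex where a: "sin \<mu> \<noteq> 0" "sin (\<mu> * (of_nat n + 1) / 2) - \<rho> * sin (\<mu> * (of_nat n - 1) / 2) = 0"
     "- of_nat n = - sin (of_nat n * \<mu>) / sin \<mu>" unfolding type1_eig_def by blast
  show "\<exists>z. z \<noteq> 0 \<and> z^2 \<noteq> 1 \<and> sv \<rho> n z = 0 \<and> h1 n z"
    using trig_conv(1)[OF n, of \<mu>] trig_conv(2)[OF n, of \<mu>] trig_conv(3)[OF n, of \<mu> \<rho>] trig_conv(5)[OF n a(1)] a by blast
next
  assume "\<exists>z. z \<noteq> 0 \<and> z^2 \<noteq> 1 \<and> sv \<rho> n z = 0 \<and> h1 n z"
  then obtain z where z: "z \<noteq> 0" "z^2 \<noteq> 1" "sv \<rho> n z = 0" "h1 n z" by blast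
  define \<mu> where "\<mu> = - \<i> * Ln z"
  have "(exp (\<i>*(\<mu>/2)))^2 = exp (\<i>*\<mu>)" by (simp add: exp_of_nat_mult[symmetric])
  also have "\<i>*\<mu> = Ln z" unfolding \<mu>_def by simp
  also have "exp (Ln z) = z" using z(1) by simp
  finally have wz: "(exp (\<i>*(\<mu>/2)))^2 = z" .
  have s: "sin \<mu> \<noteq> 0" using trig_conv(2)[OF n, of \<mu>, unfolded wz] z by simp
  show "type1_eig n \<rho> (- of_nat n)" unfolding type1_eig_def
    using s trig_conv(3)[OF n, of \<mu> \<rho>, unfolded wz] trig_conv(5)[OF n s, unfolded wz] z by blast
qed

lemma type2_iff:
  assumes n: "n = Suc m"
  shows "type2_eig n \<rho> (- of_nat n) \<longleftrightarrow> (\<exists>z. z \<noteq> 0 \<and> z^2 \<noteq> 1 \<and> cv \<rho> n z = 0 \<and> h2 n z)"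
proof
  assume "type2_eig n \<rho> (- of_nat n)"
  then obtain \<mu> :: complex where a: "sin \<mu> \<noteq> 0" "cos (\<mu> * (of_nat n + 1) / 2) - \<rho> * cos (\<mu> * (of_nat n - 1) / 2) = 0"
     "- of_nat n = sin (of_nat n * \<mu>) / sin \<mu>" unfolding type2_eig_def by blast
  show "\<exists>z. z \<noteq> 0 \<and> z^2 \<noteq> 1 \<and> cv \<rho> n z = 0 \<and> h2 n z"
    using trig_conv(1)[OF n, of \<mu>] trig_conv(2)[OF n, of \<mu>] trig_conv(4)[OF n, of \<mu> \<rho>] trig_conv(6)[OF n a(1)] a by blast
next
  assume "\<exists>z. z \<noteq> 0 \<and> z^2 \<noteq> 1 \<and> cv \<rho> n z = 0 \<and> h2 n z"
  then obtain z where z: "z \<noteq> 0" "z^2 \<noteq> 1" "cv \<rho> n z = 0" "h2 n z" by blast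
  define \<mu> where "\<mu> = - \<i> * Ln z"
  have "(exp (\<i>*(\<mu>/2)))^2 = exp (\<i>*\<mu>)" by (simp add: exp_of_nat_mult[symmetric])
  also have "\<i>*\<mu> = Ln z" unfolding \<mu>_def by simp
  also have "exp (Ln z) = z" using z(1) by simp
  finally have wz: "(exp (\<i>*(\<mu>/2)))^2 = z" .
  have s: "sin \<mu> \<noteq> 0" using trig_conv(2)[OF n, of \<mu>, unfolded wz] z by simp
  show "type2_eig n \<rho> (- of_nat n)" unfolding type2_eig_def
    using s trig_conv(4)[OF n, of \<mu> \<rho>, unfolded wz] trig_conv(6)[OF n s, unfolded wz] z by blast
qed

lemma ratio_type1:
  fixes X z \<rho> :: complex
  assumes n: "n \<ge> 2" and z: "z \<noteq> 0" "z^2 \<noteq> 1" and h: "z*(X^2-1) = of_nat n*X*(z^2-1)"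
  shows "\<rho>*(X - z) = X*z - 1 \<longleftrightarrow> \<rho> = xi n * ((X*z+1)/(X+z))"
proof -
  define N where "N = (of_nat n :: complex)"
  have z21: "z^2 - 1 \<noteq> 0" using z by simp
  have N1: "N - 1 \<noteq> 0" unfolding N_def using n by (simp add: of_nat_diff[symmetric])
  have N1': "N + 1 \<noteq> 0" unfolding N_def by (metis of_nat_Suc of_nat_eq_0_iff nat.distinct(1) add.commute)
  have hN: "z*(X^2-1) = N*X*(z^2-1)" using h unfolding N_def .
  have Xp: "X + z \<noteq> 0"
  proof
    assume "X + z = 0"
    hence X: "X = -z" by (simp add: add_eq_0_iff2)
    have "(N+1) * (z * (z^2 - 1)) = 0" using hN unfolding X by (simp add: algebra_simps power2_eq_square)
    thus False using N1' z z21 by simp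
  qed
  have Xm: "X - z \<noteq> 0"
  proof
    assume "X - z = 0"
    hence X: "X = z" by simp
    have "(N-1) * (z * (z^2 - 1)) = 0" using hN unfolding X by (simp add: algebra_simps power2_eq_square)
    thus False using N1 z z21 by simp
  qed
  have key: "(N+1)*(X*z+1)*(X-z) = (N-1)*(X*z-1)*(X+z)"
  proof -
    have "(N+1)*(X*z+1)*(X-z) - (N-1)*(X*z-1)*(X+z) = 2*(z*(X^2-1) - N*X*(z^2-1))"
      by (simp add: algebra_simps power2_eq_square)
    also have "\<dots> = 0" using hN by simp
    finally show ?thesis by simp
  qed
  have xi: "xi n = (N+1)/(N-1)" unfolding xi_def N_def ..
  show ?thesis
  proof
    assume "\<rho>*(X - z) = X*z - 1"
    hence r: "\<rho> = (X*z-1)/(X-z)" using Xm by (simp add: field_simps)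
    have k2: "(X*z-1)*((N-1)*(X+z)) = ((N+1)*(X*z+1))*(X-z)" by (metis key mult.assoc mult.commute)
    have "(X*z-1)/(X-z) = ((N+1)*(X*z+1))/((N-1)*(X+z))"
      using Xm Xp N1 k2 by (simp add: frac_eq_eq)
    thus "\<rho> = xi n * ((X*z+1)/(X+z))" unfolding r xi by simp
  next
    assume "\<rho> = xi n * ((X*z+1)/(X+z))"
    hence "\<rho>*(X-z) = (N+1)*(X*z+1)*(X-z) / ((N-1)*(X+z))" unfolding xi by simp
    also have "\<dots> = (N-1)*(X*z-1)*(X+z) / ((N-1)*(X+z))" unfolding key ..
    also have "\<dots> = X*z - 1" using N1 Xp by simp
    finally show "\<rho>*(X - z) = X*z - 1" .
  qed
qed

lemma ratio_type2:
  fixes X z \<rho> :: complex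
  assumes n: "n \<ge> 2" and z: "z \<noteq> 0" "z^2 \<noteq> 1" and h: "z*(X^2-1) = - of_nat n*X*(z^2-1)"
  shows "\<rho>*(X + z) = X*z + 1 \<longleftrightarrow> \<rho> = (X*z+1)/(X+z)"
proof -
  define N where "N = (of_nat n :: complex)"
  have z21: "z^2 - 1 \<noteq> 0" using z by simp
  have N1: "N - 1 \<noteq> 0" unfolding N_def using n by (simp add: of_nat_diff[symmetric])
  have hN: "z*(X^2-1) = - N*X*(z^2-1)" using h unfolding N_def .
  have Xp: "X + z \<noteq> 0"
  proof
    assume "X + z = 0"
    hence X: "X = -z" by (simp add: add_eq_0_iff2)
    have "(N-1) * (z * (z^2 - 1)) = 0" using hN unfolding X by (simp add: algebra_simps power2_eq_square)
    thus False using N1 z z21 by simp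
  qed
  show ?thesis using Xp by (auto simp: field_simps)
qed

lemma div_half_cancel: "c \<noteq> 0 \<Longrightarrow> (a/(2*c)) / (b/(2*c)) = a / (b::complex)"
  by (cases "b = 0") (simp_all add: field_simps)

lemma arccos_data:
  fixes t :: complex
  defines "z \<equiv> (exp (\<i>*(Arccos t/2)))^2"
  shows "z \<noteq> 0" "t = (z + 1/z)/2"
    and "n = Suc m \<Longrightarrow> chebT_half (n+1) t / chebT_half (n-1) t = (z^n*z+1)/(z^n+z)"
proof -
  define w where "w = exp (\<i>*(Arccos t/2))"
  have w0: "w \<noteq> 0" unfolding w_def by simp
  have zw: "z = w^2" unfolding z_def w_def ..
  show z0: "z \<noteq> 0" unfolding zw using w0 by simp
  have "t = cos (of_nat 2 * (Arccos t/2))" by simp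
  also have "\<dots> = (w^2 + 1/w^2)/2" unfolding cos_w w_def ..
  finally show "t = (z + 1/z)/2" unfolding zw .
  assume n: "n = Suc m"
  have ch: "chebT_half k t = (w^k + 1/w^k)/2" for k
  proof -
    have "chebT_half k t = cos (of_nat k * (Arccos t/2))" unfolding chebT_half_def by (simp add: algebra_simps)
    thus ?thesis unfolding cos_w w_def .
  qed
  define V where "V = w^m"
  have V0: "V \<noteq> 0" unfolding V_def using w0 by simp
  have e1: "w^(n+1) = V*z" unfolding n V_def zw by (simp add: power_add power2_eq_square)
  have e2: "w^(n-1) = V" unfolding n V_def by simp
  have X: "z^n = V^2*z" unfolding n V_def zw by (simp add: power_mult[symmetric] power2_eq_square power_mult_distrib algebra_simps)
  have T1: "chebT_half (n+1) t = (z^n*z+1)/(2*(V*z))" unfolding ch e1 X using V0 z0 by (simp add: field_simps power2_eq_square)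
  have T2: "chebT_half (n-1) t = (z^n+z)/(2*(V*z))" unfolding ch e2 X using V0 z0 by (simp add: field_simps power2_eq_square)
  show "chebT_half (n+1) t / chebT_half (n-1) t = (z^n*z+1)/(z^n+z)"
    unfolding T1 T2 using V0 z0 by (simp add: div_half_cancel)
qed

lemma t_pm1:
  fixes z :: complex
  assumes z: "z \<noteq> 0"
  shows "((z + 1/z)/2 = 1 \<or> (z + 1/z)/2 = -1) \<longleftrightarrow> z^2 = 1"
proof -
  have a: "(z + 1/z)/2 = 1 \<longleftrightarrow> (z-1)^2 = 0" using z by (simp add: field_simps power2_eq_square algebra_simps)
  have b: "(z + 1/z)/2 = -1 \<longleftrightarrow> (z+1)^2 = 0" using z by (simp add: field_simps power2_eq_square algebra_simps) (auto simp: eq_neg_iff_add_eq_0 algebra_simps)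
  show ?thesis unfolding a b by (auto simp: power2_eq_1_iff add_eq_0_iff2)
qed

lemma U_h:
  assumes z: "z \<noteq> 0" "z^2 \<noteq> 1"
  shows "poly (chebU (Suc k)) ((z + 1/z)/2) = of_nat (Suc (Suc k)) \<longleftrightarrow> h1 (Suc (Suc k)) z"
    and "poly (chebU (Suc k)) ((z + 1/z)/2) = - of_nat (Suc (Suc k)) \<longleftrightarrow> h2 (Suc (Suc k)) z"
proof -
  define n where "n = Suc (Suc k)"
  define U where "U = poly (chebU (Suc k)) ((z + 1/z)/2)"
  have cz: "U * (z - 1/z) = z^n - 1/z^n" unfolding U_def n_def using chebU_z[OF z(1), of "Suc k"] by simp
  have zz: "z - 1/z \<noteq> 0" using z by (simp add: field_simps power2_eq_square)
  have zn0: "z^n \<noteq> 0" using z by simp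
  have e1: "(z^n - 1/z^n) * (z*z^n) = z*((z^n)^2-1)" using zn0 by (simp add: field_simps power2_eq_square)
  have e2: "(z - 1/z) * (z*z^n) = z^n*(z^2-1)" using z by (simp add: field_simps power2_eq_square)
  have cz0: "z*z^n \<noteq> 0" using z zn0 by simp
  have "U = c \<longleftrightarrow> c * (z - 1/z) = z^n - 1/z^n" for c
    using zz cz by (metis mult_cancel_right)
  also have "\<dots> c \<longleftrightarrow> c * ((z - 1/z) * (z*z^n)) = (z^n - 1/z^n) * (z*z^n)" for c
    using cz0 by (metis mult_cancel_right mult.assoc)
  also have "\<dots> c \<longleftrightarrow> c * (z^n*(z^2-1)) = z*((z^n)^2-1)" for c unfolding e1 e2 ..
  finally have g: "U = c \<longleftrightarrow> c * (z^n*(z^2-1)) = z*((z^n)^2-1)" for c .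
  show "poly (chebU (Suc k)) ((z + 1/z)/2) = of_nat (Suc (Suc k)) \<longleftrightarrow> h1 (Suc (Suc k)) z"
    unfolding U_def[symmetric] n_def[symmetric] g h1_def by (auto simp: algebra_simps)
  show "poly (chebU (Suc k)) ((z + 1/z)/2) = - of_nat (Suc (Suc k)) \<longleftrightarrow> h2 (Suc (Suc k)) z"
    unfolding U_def[symmetric] n_def[symmetric] g h2_def by (auto simp: algebra_simps)
qed

lemma recip_cases:
  fixes z z' :: complex
  assumes "z \<noteq> 0" "z' \<noteq> 0" "(z' + 1/z')/2 = (z + 1/z)/2"
  shows "z' = z \<or> z' = 1/z"
proof -
  have e: "z' + 1/z' = z + 1/z" by (metis assms(3) divide_cancel_right zero_neq_numeral)
  have "(z' - z) * (z'*z - 1) = z*z'*((z' + 1/z') - (z + 1/z))" using assms(1,2) by (simp add: field_simps algebra_simps)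
  hence "(z' - z) * (z'*z - 1) = 0" unfolding e by simp
  hence "z' - z = 0 \<or> z'*z - 1 = 0" by (simp only: mult_eq_0_iff)
  moreover have "z'*z - 1 = 0 \<Longrightarrow> z' = 1/z" using assms(1) by (simp add: field_simps)
  ultimately show ?thesis by auto
qed

lemma sv_recip: "z \<noteq> 0 \<Longrightarrow> sv \<rho> n (1/z) = - (inverse z ^ (n+1) * sv \<rho> n z)"
  unfolding sv_def by (simp add: field_simps power_Suc)
lemma cv_recip: "z \<noteq> 0 \<Longrightarrow> cv \<rho> n (1/z) = inverse z ^ (n+1) * cv \<rho> n z"
  unfolding cv_def by (simp add: field_simps power_Suc)

lemma rhs1_iff:
  assumes n: "n = Suc (Suc k)" and r: "\<rho> \<noteq> 0"
  shows "(\<exists>t0. poly (q1 n) t0 = 0 \<and> \<rho> = xi n * chebT_half (n + 1) t0 / chebT_half (n - 1) t0)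
     \<longleftrightarrow> (\<exists>z. z \<noteq> 0 \<and> z^2 \<noteq> 1 \<and> sv \<rho> n z = 0 \<and> h1 n z)"
proof
  assume "\<exists>t0. poly (q1 n) t0 = 0 \<and> \<rho> = xi n * chebT_half (n + 1) t0 / chebT_half (n - 1) t0"
  then obtain t0 where t0: "poly (q1 n) t0 = 0" "\<rho> = xi n * chebT_half (n + 1) t0 / chebT_half (n - 1) t0" by blast
  define z where "z = (exp (\<i>*(Arccos t0/2)))^2"
  note ad = arccos_data[where t=t0, folded z_def]
  have z0: "z \<noteq> 0" by (rule ad(1))
  have tz: "t0 = (z + 1/z)/2" by (rule ad(2))
  have qr: "poly (chebU (Suc k)) t0 = of_nat n" "t0 \<noteq> 1" "t0 \<noteq> -1" using t0(1) q1_roots[of k t0] n by auto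
  have z2: "z^2 \<noteq> 1" using t_pm1[OF z0] qr(2,3) tz by auto
  have h: "h1 n z" using U_h(1)[OF z0 z2, of k] qr(1) tz n by simp
  have e: "chebT_half (n+1) t0 / chebT_half (n-1) t0 = (z^n*z+1)/(z^n+z)" by (rule ad(3)[OF n])
  have rr: "\<rho> = xi n * ((z^n*z+1)/(z^n+z))" using t0(2) unfolding e[symmetric] by (simp only: times_divide_eq_right)
  have "\<rho>*(z^n - z) = z^n*z - 1" using ratio_type1[of n z "z^n" \<rho>] n z0 z2 h rr unfolding h1_def by simp
  hence "sv \<rho> n z = 0" by (simp add: sv_X)
  thus "\<exists>z. z \<noteq> 0 \<and> z^2 \<noteq> 1 \<and> sv \<rho> n z = 0 \<and> h1 n z" using z0 z2 h by blast
next
  assume "\<exists>z. z \<noteq> 0 \<and> z^2 \<noteq> 1 \<and> sv \<rho> n z = 0 \<and> h1 n z"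
  then obtain z where z: "z \<noteq> 0" "z^2 \<noteq> 1" "sv \<rho> n z = 0" "h1 n z" by blast
  define t0 where "t0 = (z + 1/z)/2"
  have U: "poly (chebU (Suc k)) t0 = of_nat n" using U_h(1)[OF z(1,2), of k] z(4) n unfolding t0_def by simp
  have tpm: "t0 \<noteq> 1" "t0 \<noteq> -1" using t_pm1[OF z(1)] z(2) unfolding t0_def by auto
  have q: "poly (q1 n) t0 = 0" using q1_roots[of k t0] U tpm n by simp
  define z' where "z' = (exp (\<i>*(Arccos t0/2)))^2"
  note ad = arccos_data[where t=t0, folded z'_def]
  have z'0: "z' \<noteq> 0" by (rule ad(1))
  have tz: "t0 = (z' + 1/z')/2" by (rule ad(2))
  have z'2: "z'^2 \<noteq> 1" using t_pm1[OF z'0] tpm tz by auto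
  have h': "h1 n z'" using U_h(1)[OF z'0 z'2, of k] U tz n by simp
  have rc: "z' = z \<or> z' = 1/z" by (rule recip_cases[OF z(1) z'0], unfold t0_def[symmetric], rule tz[symmetric])
  have s': "sv \<rho> n z' = 0" using rc z(3) sv_recip[OF z(1), of \<rho> n] by auto
  have "\<rho>*(z'^n - z') = z'^n*z' - 1" using s' by (simp add: sv_X)
  hence "\<rho> = xi n * ((z'^n*z'+1)/(z'^n+z'))" using ratio_type1[of n z' "z'^n" \<rho>] n z'0 z'2 h' unfolding h1_def by simp
  hence "\<rho> = xi n * chebT_half (n + 1) t0 / chebT_half (n - 1) t0" unfolding ad(3)[OF n, symmetric] by (simp only: times_divide_eq_right)
  thus "\<exists>t0. poly (q1 n) t0 = 0 \<and> \<rho> = xi n * chebT_half (n + 1) t0 / chebT_half (n - 1) t0" using q by blast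
qed

lemma rhs2_iff:
  assumes n: "n = Suc (Suc k)" and r: "\<rho> \<noteq> 0"
  shows "(\<exists>t0. poly (q2 n) t0 = 0 \<and> \<rho> = chebT_half (n + 1) t0 / chebT_half (n - 1) t0)
     \<longleftrightarrow> (\<exists>z. z \<noteq> 0 \<and> z^2 \<noteq> 1 \<and> cv \<rho> n z = 0 \<and> h2 n z)"
proof
  assume "\<exists>t0. poly (q2 n) t0 = 0 \<and> \<rho> = chebT_half (n + 1) t0 / chebT_half (n - 1) t0"
  then obtain t0 where t0: "poly (q2 n) t0 = 0" "\<rho> = chebT_half (n + 1) t0 / chebT_half (n - 1) t0" by blast
  define z where "z = (exp (\<i>*(Arccos t0/2)))^2"
  note ad = arccos_data[where t=t0, folded z_def]
  have z0: "z \<noteq> 0" by (rule ad(1))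
  have tz: "t0 = (z + 1/z)/2" by (rule ad(2))
  have qr: "poly (chebU (Suc k)) t0 = - of_nat n" "t0 \<noteq> 1" "t0 \<noteq> -1" using t0(1) q2_roots[of k t0] n by auto
  have z2: "z^2 \<noteq> 1" using t_pm1[OF z0] qr(2,3) tz by auto
  have h: "h2 n z" using U_h(2)[OF z0 z2, of k] qr(1) tz n by simp
  have rr: "\<rho> = (z^n*z+1)/(z^n+z)" using t0(2) unfolding ad(3)[OF n] .
  have "\<rho>*(z^n + z) = z^n*z + 1" using ratio_type2[of n z "z^n" \<rho>] n z0 z2 h rr unfolding h2_def by simp
  hence "cv \<rho> n z = 0" by (simp add: cv_X)
  thus "\<exists>z. z \<noteq> 0 \<and> z^2 \<noteq> 1 \<and> cv \<rho> n z = 0 \<and> h2 n z" using z0 z2 h by blast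
next
  assume "\<exists>z. z \<noteq> 0 \<and> z^2 \<noteq> 1 \<and> cv \<rho> n z = 0 \<and> h2 n z"
  then obtain z where z: "z \<noteq> 0" "z^2 \<noteq> 1" "cv \<rho> n z = 0" "h2 n z" by blast
  define t0 where "t0 = (z + 1/z)/2"
  have U: "poly (chebU (Suc k)) t0 = - of_nat n" using U_h(2)[OF z(1,2), of k] z(4) n unfolding t0_def by simp
  have tpm: "t0 \<noteq> 1" "t0 \<noteq> -1" using t_pm1[OF z(1)] z(2) unfolding t0_def by auto
  have q: "poly (q2 n) t0 = 0" using q2_roots[of k t0] U tpm n by simp
  define z' where "z' = (exp (\<i>*(Arccos t0/2)))^2"
  note ad = arccos_data[where t=t0, folded z'_def]
  have z'0: "z' \<noteq> 0" by (rule ad(1))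
  have tz: "t0 = (z' + 1/z')/2" by (rule ad(2))
  have z'2: "z'^2 \<noteq> 1" using t_pm1[OF z'0] tpm tz by auto
  have h': "h2 n z'" using U_h(2)[OF z'0 z'2, of k] U tz n by simp
  have rc: "z' = z \<or> z' = 1/z" by (rule recip_cases[OF z(1) z'0], unfold t0_def[symmetric], rule tz[symmetric])
  have s': "cv \<rho> n z' = 0" using rc z(3) cv_recip[OF z(1), of \<rho> n] by auto
  have "\<rho>*(z'^n + z') = z'^n*z' + 1" using s' by (simp add: cv_X)
  hence "\<rho> = (z'^n*z'+1)/(z'^n+z')" using ratio_type2[of n z' "z'^n" \<rho>] n z'0 z'2 h' unfolding h2_def by simp
  hence "\<rho> = chebT_half (n + 1) t0 / chebT_half (n - 1) t0" unfolding ad(3)[OF n] .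
  thus "\<exists>t0. poly (q2 n) t0 = 0 \<and> \<rho> = chebT_half (n + 1) t0 / chebT_half (n - 1) t0" using q by blast
qed

theorem theorem4p5:
  fixes n :: nat and \<rho> :: complex
  assumes "n \<ge> 2" and "\<rho> \<notin> {-1, 0, 1}"
  shows "(\<forall>lam. alg_mult n \<rho> lam \<ge> 2 \<longrightarrow> lam = - of_nat n \<and> alg_mult n \<rho> lam = 2)
    \<and> ((alg_mult n \<rho> (- of_nat n) = 2 \<and> type1_eig n \<rho> (- of_nat n)) \<longleftrightarrow>
         (\<exists>t0. poly (q1 n) t0 = 0 \<and>
               \<rho> = xi n * chebT_half (n + 1) t0 / chebT_half (n - 1) t0))
    \<and> ((alg_mult n \<rho> (- of_nat n) = 2 \<and> type2_eig n \<rho> (- of_nat n)) \<longleftrightarrow>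
         (\<exists>t0. poly (q2 n) t0 = 0 \<and>
               \<rho> = chebT_half (n + 1) t0 / chebT_half (n - 1) t0))"
proof -
  obtain k where n: "n = Suc (Suc k)" using assms(1) by (metis add_2_eq_Suc le_Suc_ex)
  have r: "\<rho> \<noteq> 0" "\<rho>^2 \<noteq> 1" using assms(2) by (auto simp: power2_eq_1_iff)
  have am: "alg_mult n \<rho> l = order l (Pc \<rho> n)" for l unfolding alg_mult_def Pc_def ..
  have P1: "\<forall>lam. alg_mult n \<rho> lam \<ge> 2 \<longrightarrow> lam = - of_nat n \<and> alg_mult n \<rho> lam = 2"
    unfolding am using part1[OF r, of _ k] n by blast
  have dm: "alg_mult n \<rho> (- of_nat n) = 2"
    if "(\<exists>z. z \<noteq> 0 \<and> z^2 \<noteq> 1 \<and> ((sv \<rho> n z = 0 \<and> h1 n z) \<or> (cv \<rho> n z = 0 \<and> h2 n z)))"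
  proof -
    from that obtain z where z: "z \<noteq> 0" "z^2 \<noteq> 1" and c: "(sv \<rho> n z = 0 \<and> h1 n z) \<or> (cv \<rho> n z = 0 \<and> h2 n z)" by blast
    have "order z (Sp \<rho> (Suc (Suc k))) \<ge> 2 \<or> order z (Cp \<rho> (Suc (Suc k))) \<ge> 2"
      using c S_double_rev[OF z(2,1), of \<rho> k] C_double_rev[OF z(2,1), of \<rho> k] n by auto
    hence "order (- of_nat n) (Pc \<rho> n) \<ge> 2" using double_to_mult[OF r z(2,1)] n by blast
    thus ?thesis using P1 unfolding am by blast
  qed
  have T1: "(alg_mult n \<rho> (- of_nat n) = 2 \<and> type1_eig n \<rho> (- of_nat n)) \<longleftrightarrow>
         (\<exists>t0. poly (q1 n) t0 = 0 \<and> \<rho> = xi n * chebT_half (n + 1) t0 / chebT_half (n - 1) t0)"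
    unfolding rhs1_iff[OF n r(1)] type1_iff[OF n] using dm by blast
  have T2: "(alg_mult n \<rho> (- of_nat n) = 2 \<and> type2_eig n \<rho> (- of_nat n)) \<longleftrightarrow>
         (\<exists>t0. poly (q2 n) t0 = 0 \<and> \<rho> = chebT_half (n + 1) t0 / chebT_half (n - 1) t0)"
    unfolding rhs2_iff[OF n r(1)] type2_iff[OF n] using dm by blast
  show ?thesis using P1 T1 T2 by blast
qed


end
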